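(* Let $m\ge 1$ and let $\mathbf{S}=(S_1,\dots,S_m)$ be a multimodal source: discrete random variables with finite alphabets $\mathcal{S}_1,\dots,\mathcal{S}_m$ and joint pmf $p_{S_1,\dots,S_m}$. Fix a non-empty subset $E\subseteq[m]=\{1,\dots,m\}$ and suppose the encoder observes i.i.d. samples $\mathbf{S}_E^k=(S_i^k)_{i\in E}$ of $\mathbf{S}_E=(S_i)_{i\in E}$ (with $\mathbf{S}^k$ i.i.d. $\sim p_{\mathbf S}$). Let the decoder reconstruct $\hat{\mathbf S}^k=(\hat S_1^k,\dots,\hat S_m^k)$ subject to distortion constraints $\mathbf D=(D_1,\dots,D_m)$ and perception constraints $\mathbf P=(P_1,\dots,P_m)$. Then the multimodal rate-distortion-perception function $R(\mathbf D,\mathbf P)$ (defined operationally in the context) equals $$ R(\mathbf D,\mathbf P)=\inf_{p_{\hat{\mathbf S}\mid \mathbf S_E}} I(\mathbf S_E;\hat{\mathbf S}) $$ where the infimum is over conditional pmfs $p_{\hat{\mathbf S}\mid\mathbf S_E}$ (with $\hat{\mathbf S}=(\hat S_1,\dots,\hat S_m)$, joint law $p_{\mathbf S}\,p_{\hat{\mathbf S}\mid\mathbf S_E}$) satisfying $$ \mathbb E\, d_i(S_i,\hat S_i)\le D_i\ \ \forall i\in E,\qquad \mathbb E\,\hat d_i(\mathbf S_E,\hat S_i)\le D_i\ \ \forall i\in [m]\setminus E,\qquad \phi_i(p_{S_i},p_{\hat S_i})\le P_i\ \ \forall i\in[m], $$ with the modified distortion $\hat d_i(\mathbf s_E,\hat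 s_i)=\sum_{s_i\in\mathcal S_i} p(s_i\mid \mathbf s_E)\, d_i(s_i,\hat s_i)$.
   Context: Reconstruction alphabets $\hat{\mathcal S}_i$ are finite. For each $i$, $d_i:\mathcal S_i\times\hat{\mathcal S}_i\to[0,\infty)$ is a distortion measure, extended to sequences by $d_i(s_i^k,\hat s_i^k)=\frac1k\sum_{j=1}^k d_i(s_{i,j},\hat s_{i,j})$. For each $i$, $\phi_i:\mathcal D_{\mathcal S_i}\times\mathcal D_{\hat{\mathcal S}_i}\to[0,\infty)$ is a perception metric, convex and continuous in its second argument, where $\mathcal D_{\mathcal X}$ denotes the probability simplex on $\mathcal X$. For a reconstruction sequence $\hat S_i^k=(\hat S_{i,1},\dots,\hat S_{i,k})$, $\bar p_{\hat S_i^k}=\frac1k\sum_{j=1}^k p_{\hat S_{i,j}}$ is its time-averaged marginal. Source coding problem: an encoder $f_s:\prod_{i\in E}\mathcal S_i^k\to\mathcal M$ and decoder $g_s:\mathcal M\to\prod_{i\in[m]}\hat{\mathcal S}_i^k$, with $\hat{\mathbf S}^k=g_s(f_s(\mathbf S_E^k))$. A tuple $(R,\mathbf D,\mathbf P)$ is achievable if for every $\epsilon>0$ and all $k$ large enough there exist $(f_s,g_s)$ with $\frac1k\log|\mathcal M|\le R+\epsilon$, $\mathbb E\,d_i(S_i^k,\hat S_i^k)\le D_i+\epsilon$ for all $i\in[m]$, and $\phi_i(p_{S_i},\bar p_{\hat S_i^k})\le P_i+\epsilon$ for all $i\in[m]$. With $\Omega$ the set of achievable tuples, $R(\mathbf D,\mathbf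 P)=\inf\{R:(R,\mathbf D,\mathbf P)\in\Omega\}$. *)

theory Defs
  imports "HOL-Analysis.Analysis"
begin

(* Modalities are indexed by a finite type 'i (so m = CARD('i) >= 1).
   Source symbols of modality i live in the finite set Sa i :: 'a set,
   reconstruction symbols of modality i in the finite set Rh i :: 'b set.
   A joint source symbol is a tuple s :: 'i => 'a (in PiE UNIV Sa);
   the E-part of it is  restrict s E  (an element of PiE E Sa).
   All pmfs are real-valued functions; logarithms are base 2 throughout. *)

definition prob_simplex :: "'x set \<Rightarrow> ('x \<Rightarrow> real) set" where
  "prob_simplex X = {q. (\<forall>x. 0 \<le> q x) \<and> (\<forall>x. x \<notin> X \<longrightarrow> q x = 0) \<and> sum q X = 1}"

definition convex_cont_on_simplex :: "'x set \<Rightarrow> (('x \<Rightarrow> real) \<Rightarrow> real) \<Rightarrow> bool" where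
  "convex_cont_on_simplex X F \<longleftrightarrow>
     (\<forall>q1\<in>prob_simplex X. \<forall>q2\<in>prob_simplex X. \<forall>t::real. 0 \<le> t \<and> t \<le> 1 \<longrightarrow>
        F (\<lambda>x. t * q1 x + (1 - t) * q2 x) \<le> t * F q1 + (1 - t) * F q2)
     \<and> continuous_on (prob_simplex X) F"

definition marg_E :: "(('i \<Rightarrow> 'a) \<Rightarrow> real) \<Rightarrow> ('i \<Rightarrow> 'a set) \<Rightarrow> 'i set \<Rightarrow> ('i \<Rightarrow> 'a) \<Rightarrow> real" where
  "marg_E pS Sa E x = (\<Sum>s\<in>Pi\<^sub>E UNIV Sa. if restrict s E = x then pS s else 0)"

definition marg_i :: "(('i \<Rightarrow> 'a) \<Rightarrow> real) \<Rightarrow> ('i \<Rightarrow> 'a set) \<Rightarrow> 'i \<Rightarrow> 'a \<Rightarrow> real" where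
  "marg_i pS Sa i a = (\<Sum>s\<in>Pi\<^sub>E UNIV Sa. if s i = a then pS s else 0)"

(* conditional pmf p(s_i | s_E) (set to 0 where p(s_E) = 0) *)
definition cond_i :: "(('i \<Rightarrow> 'a) \<Rightarrow> real) \<Rightarrow> ('i \<Rightarrow> 'a set) \<Rightarrow> 'i set \<Rightarrow> 'i \<Rightarrow> 'a \<Rightarrow> ('i \<Rightarrow> 'a) \<Rightarrow> real" where
  "cond_i pS Sa E i a x =
     (if marg_E pS Sa E x = 0 then 0
      else (\<Sum>s\<in>Pi\<^sub>E UNIV Sa. if s i = a \<and> restrict s E = x then pS s else 0) / marg_E pS Sa E x)"

definition hat_d :: "(('i \<Rightarrow> 'a) \<Rightarrow> real) \<Rightarrow> ('i \<Rightarrow> 'a set) \<Rightarrow> 'i set \<Rightarrow> ('i \<Rightarrow> 'a \<Rightarrow> 'b \<Rightarrow> real)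
                      \<Rightarrow> 'i \<Rightarrow> ('i \<Rightarrow> 'a) \<Rightarrow> 'b \<Rightarrow> real" where
  "hat_d pS Sa E d i x b = (\<Sum>a\<in>Sa i. cond_i pS Sa E i a x * d i a b)"

definition test_channel :: "('i \<Rightarrow> 'a set) \<Rightarrow> ('i \<Rightarrow> 'b set) \<Rightarrow> 'i set \<Rightarrow> (('i \<Rightarrow> 'a) \<Rightarrow> ('i \<Rightarrow> 'b) \<Rightarrow> real) \<Rightarrow> bool" where
  "test_channel Sa Rh E Q \<longleftrightarrow> (\<forall>x\<in>Pi\<^sub>E E Sa. Q x \<in> prob_simplex (Pi\<^sub>E UNIV Rh))"

definition exp_dist where
  "exp_dist pS Sa Rh E Q d i =
     (\<Sum>s\<in>Pi\<^sub>E UNIV Sa. \<Sum>t\<in>Pi\<^sub>E UNIV Rh. pS s * Q (restrict s E) t * d i (s i) (t i))"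

definition exp_hat_dist where
  "exp_hat_dist pS Sa Rh E Q d i =
     (\<Sum>x\<in>Pi\<^sub>E E Sa. \<Sum>t\<in>Pi\<^sub>E UNIV Rh. marg_E pS Sa E x * Q x t * hat_d pS Sa E d i x (t i))"

definition recon_marg where
  "recon_marg pS Sa Rh E Q i b =
     (\<Sum>s\<in>Pi\<^sub>E UNIV Sa. \<Sum>t\<in>Pi\<^sub>E UNIV Rh. if t i = b then pS s * Q (restrict s E) t else 0)"

definition mutual_info :: "'x set \<Rightarrow> 'y set \<Rightarrow> ('x \<Rightarrow> 'y \<Rightarrow> real) \<Rightarrow> real" where
  "mutual_info A B J =
     (\<Sum>x\<in>A. \<Sum>y\<in>B. if J x y = 0 then 0
        else J x y * log 2 (J x y / ((\<Sum>y'\<in>B. J x y') * (\<Sum>x'\<in>A. J x' y))))"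

definition info_SE_hat where
  "info_SE_hat pS Sa Rh E Q =
     mutual_info (Pi\<^sub>E E Sa) (Pi\<^sub>E UNIV Rh) (\<lambda>x t. marg_E pS Sa E x * Q x t)"

(* informational RDP function (infimum in the extended reals; empty inf = \<infinity>) *)
definition R_info where
  "R_info pS Sa Rh E d \<phi> D P =
     Inf {ereal (info_SE_hat pS Sa Rh E Q) | Q.
            test_channel Sa Rh E Q
          \<and> (\<forall>i\<in>E. exp_dist pS Sa Rh E Q d i \<le> D i)
          \<and> (\<forall>i\<in>- E. exp_hat_dist pS Sa Rh E Q d i \<le> D i)
          \<and> (\<forall>i. \<phi> i (marg_i pS Sa i) (recon_marg pS Sa Rh E Q i) \<le> P i)}"

definition seqs :: "('i \<Rightarrow> 'a set) \<Rightarrow> nat \<Rightarrow> (nat \<Rightarrow> 'i \<Rightarrow> 'a) set" where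
  "seqs Sa k = Pi\<^sub>E {..<k} (\<lambda>_. Pi\<^sub>E UNIV Sa)"

definition seq_prob :: "(('i \<Rightarrow> 'a) \<Rightarrow> real) \<Rightarrow> nat \<Rightarrow> (nat \<Rightarrow> 'i \<Rightarrow> 'a) \<Rightarrow> real" where
  "seq_prob pS k s = (\<Prod>j<k. pS (s j))"

definition enc_input :: "'i set \<Rightarrow> nat \<Rightarrow> (nat \<Rightarrow> 'i \<Rightarrow> 'a) \<Rightarrow> (nat \<Rightarrow> 'i \<Rightarrow> 'a)" where
  "enc_input E k s = (\<lambda>j\<in>{..<k}. restrict (s j) E)"

(* a code with message set M = {0..<N}: encoder f, decoder g (g m j i = hat s_{i,j}) *)
definition code_valid :: "('i \<Rightarrow> 'a set) \<Rightarrow> ('i \<Rightarrow> 'b set) \<Rightarrow> 'i set \<Rightarrow> nat \<Rightarrow> nat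
     \<Rightarrow> ((nat \<Rightarrow> 'i \<Rightarrow> 'a) \<Rightarrow> nat) \<Rightarrow> (nat \<Rightarrow> nat \<Rightarrow> 'i \<Rightarrow> 'b) \<Rightarrow> bool" where
  "code_valid Sa Rh E k N f g \<longleftrightarrow>
     1 \<le> N \<and> (\<forall>s\<in>seqs Sa k. f (enc_input E k s) < N)
     \<and> (\<forall>m<N. \<forall>j<k. \<forall>i. g m j i \<in> Rh i)"

definition code_dist where
  "code_dist pS Sa E d k f g i =
     (\<Sum>s\<in>seqs Sa k. seq_prob pS k s *
        ((1 / real k) * (\<Sum>j<k. d i (s j i) (g (f (enc_input E k s)) j i))))"

definition code_recon_marg where
  "code_recon_marg pS Sa E k f g i b =
     (1 / real k) * (\<Sum>j<k. \<Sum>s\<in>seqs Sa k.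
        if g (f (enc_input E k s)) j i = b then seq_prob pS k s else 0)"

definition achievable where
  "achievable pS Sa Rh E d \<phi> R D P \<longleftrightarrow>
     (\<forall>\<epsilon>>0. \<exists>K. \<forall>k\<ge>K. \<exists>N f g.
        code_valid Sa Rh E k N f g
      \<and> log 2 (real N) / real k \<le> R + \<epsilon>
      \<and> (\<forall>i. code_dist pS Sa E d k f g i \<le> D i + \<epsilon>)
      \<and> (\<forall>i. \<phi> i (marg_i pS Sa i) (code_recon_marg pS Sa E k f g i) \<le> P i + \<epsilon>))"

(* operational RDP function (infimum in the extended reals; empty inf = \<infinity>) *)
definition R_op where
  "R_op pS Sa Rh E d \<phi> D P = Inf {ereal R | R. achievable pS Sa Rh E d \<phi> R D P}"

end

theory Submission
  imports Defs
begin

lemma gibbs_ln: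
  fixes P A :: "'z \<Rightarrow> real"
  assumes fin: "finite Z" and P0: "\<And>z. z \<in> Z \<Longrightarrow> 0 \<le> P z" and P1: "sum P Z = 1"
    and A0: "\<And>z. z \<in> Z \<Longrightarrow> 0 \<le> A z" and PA: "\<And>z. z \<in> Z \<Longrightarrow> 0 < P z \<Longrightarrow> 0 < A z"
  shows "(\<Sum>z\<in>Z. if P z = 0 then 0 else P z * ln (A z / P z)) \<le> ln (sum A Z)"
proof -
  have "\<exists>z\<in>Z. P z > 0"
  proof (rule ccontr)
    assume "\<not> ?thesis"
    then have "\<forall>z\<in>Z. P z = 0" using P0 by (meson antisym not_less)
    then have "sum P Z = 0" by simp
    with P1 show False by simp
  qed
  then obtain z0 where z0: "z0 \<in> Z" "P z0 > 0" by blast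
  define S where "S = sum A Z"
  have "A z0 \<le> S" unfolding S_def using fin A0 z0 by (intro member_le_sum) auto
  moreover have "A z0 > 0" using PA z0 by auto
  ultimately have S0: "S > 0" by linarith
  have le: "(if P z = 0 then 0 else P z * ln (A z / P z)) \<le> A z / S - P z + P z * ln S"
    if z: "z \<in> Z" for z
  proof (cases "P z = 0")
    case True
    then show ?thesis using A0[OF z] S0 by simp
  next
    case False
    then have Pp: "P z > 0" using P0[OF z] by simp
    have Ap: "A z > 0" using PA[OF z Pp] .
    have "ln (A z / P z) = ln (A z / (P z * S)) + ln S"
      using Pp Ap S0 by (simp add: ln_div ln_mult)
    moreover have "ln (A z / (P z * S)) \<le> A z / (P z * S) - 1"
      using Pp Ap S0 by (intro ln_le_minus_one) simp
    ultimately have "P z * ln (A z / P z) \<le> P z * (A z / (P z * S) - 1) + P z * ln S"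
      using Pp by (simp add: distrib_left mult_left_mono)
    also have "\<dots> = A z / S - P z + P z * ln S" using Pp S0 by (simp add: field_simps)
    finally show ?thesis using False by simp
  qed
  have "(\<Sum>z\<in>Z. if P z = 0 then 0 else P z * ln (A z / P z)) \<le> (\<Sum>z\<in>Z. A z / S - P z + P z * ln S)"
    by (rule sum_mono) (rule le)
  also have "\<dots> = sum A Z / S - sum P Z + sum P Z * ln S"
    by (simp add: sum.distrib sum_subtractf sum_divide_distrib sum_distrib_right)
  also have "\<dots> = ln S" using S0 P1 by (simp add: S_def)
  finally show ?thesis by (simp add: S_def)
qed

definition T :: "real \<Rightarrow> real \<Rightarrow> real" where
  "T a b = (if a = 0 then 0 else a * ln (a / b))"

lemma log_sum_ineq:
  fixes a b :: "'j \<Rightarrow> real"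
  assumes fin: "finite K" and a0: "\<And>j. j \<in> K \<Longrightarrow> 0 \<le> a j" and b0: "\<And>j. j \<in> K \<Longrightarrow> 0 \<le> b j"
    and ab: "\<And>j. j \<in> K \<Longrightarrow> 0 < a j \<Longrightarrow> 0 < b j"
  shows "T (sum a K) (sum b K) \<le> (\<Sum>j\<in>K. T (a j) (b j))"
proof (cases "sum a K = 0")
  case True
  then have "\<forall>j\<in>K. a j = 0" using sum_nonneg_eq_0_iff[OF fin] a0 by blast
  then show ?thesis using True by (simp add: T_def)
next
  case False
  define A where "A = sum a K"
  define B where "B = sum b K"
  have Ap: "A > 0" using False a0 sum_nonneg[of K a] unfolding A_def by force
  obtain j0 where j0: "j0 \<in> K" "a j0 > 0"
    using False a0 by (metis less_eq_real_def sum.neutral)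
  have "b j0 \<le> B" unfolding B_def using fin b0 j0 by (intro member_le_sum) auto
  then have Bp: "B > 0" using ab[OF j0] by linarith
  define P where "P j = a j / A" for j
  define C where "C j = b j / B" for j
  have "(\<Sum>j\<in>K. if P j = 0 then 0 else P j * ln (C j / P j)) \<le> ln (sum C K)"
    apply (rule gibbs_ln[OF fin])
    using a0 b0 ab Ap Bp by (auto simp: P_def C_def sum_divide_distrib[symmetric] A_def B_def zero_less_divide_iff)
  also have "sum C K = 1" using Bp by (simp add: C_def sum_divide_distrib[symmetric] B_def)
  finally have g: "(\<Sum>j\<in>K. if P j = 0 then 0 else P j * ln (C j / P j)) \<le> 0" by simp
  have eq: "T (a j) (b j) = a j * ln (A / B) - A * (if P j = 0 then 0 else P j * ln (C j / P j))"
    if j: "j \<in> K" for j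
  proof (cases "a j = 0")
    case True then show ?thesis by (simp add: T_def P_def)
  next
    case False
    then have aj: "a j > 0" using a0[OF j] by simp
    have bj: "b j > 0" using ab[OF j aj] .
    have L: "ln (C j / P j) = ln (A / B) - ln (a j / b j)"
      using aj bj Ap Bp unfolding C_def P_def by (simp add: ln_div ln_mult field_simps)
    have Pn: "P j \<noteq> 0" using aj Ap by (simp add: P_def)
    have PA: "A * P j = a j" using Ap by (simp add: P_def)
    have "a j * ln (A / B) - A * (P j * ln (C j / P j)) = a j * ln (A / B) - (A * P j) * ln (C j / P j)"
      by simp
    also have "\<dots> = a j * ln (a j / b j)" unfolding PA L by (simp add: algebra_simps)
    finally show ?thesis using False Pn by (simp add: T_def)
  qed
  have "(\<Sum>j\<in>K. T (a j) (b j)) = (\<Sum>j\<in>K. a j * ln (A / B)) - A * (\<Sum>j\<in>K. if P j = 0 then 0 else P j * ln (C j / P j))"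
    by (simp add: eq sum_subtractf sum_distrib_left)
  also have "(\<Sum>j\<in>K. a j * ln (A / B)) = A * ln (A/B)" by (simp add: A_def sum_distrib_right)
  finally have "(\<Sum>j\<in>K. T (a j) (b j)) \<ge> A * ln (A/B)"
    using g Ap by (simp add: mult_nonpos_nonneg  mult_le_0_iff)
  then show ?thesis using Ap by (simp add: T_def A_def B_def)
qed

definition seqset :: "nat \<Rightarrow> 'x set \<Rightarrow> (nat \<Rightarrow> 'x) set" where
  "seqset k X = Pi\<^sub>E {..<k} (\<lambda>_. X)"

definition pk :: "nat \<Rightarrow> ('x \<Rightarrow> real) \<Rightarrow> (nat \<Rightarrow> 'x) \<Rightarrow> real" where
  "pk k p x = (\<Prod>j<k. p (x j))"

lemma finite_seqset: "finite X \<Longrightarrow> finite (seqset k X)"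
  unfolding seqset_def by (intro finite_PiE) auto

lemma sum_prod_seqset:
  fixes f :: "nat \<Rightarrow> 'x \<Rightarrow> real"
  assumes "finite X"
  shows "(\<Sum>x\<in>seqset k X. \<Prod>j<k. f j (x j)) = (\<Prod>j<k. \<Sum>a\<in>X. f j a)"
  unfolding seqset_def using prod_sum_PiE[of "{..<k}" "\<lambda>_. X" f] assms by simp

lemma sum_pk:
  assumes "finite X" "sum p X = 1"
  shows "sum (pk k p) (seqset k X) = 1"
  unfolding pk_def using sum_prod_seqset[of X "\<lambda>_. p" k] assms by simp

lemma pk_nonneg: "(\<And>a. a \<in> X \<Longrightarrow> 0 \<le> p a) \<Longrightarrow> x \<in> seqset k X \<Longrightarrow> 0 \<le> pk k p x"
  unfolding pk_def seqset_def by (intro prod_nonneg) (auto simp: PiE_iff)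

lemma marg_pk:
  assumes fin: "finite X" and s1: "sum p X = 1" and j: "j < k"
  shows "(\<Sum>x\<in>seqset k X. if x j = a then pk k p x else 0) = (if a \<in> X then p a else 0)"
proof -
  define f where "f l v = (if l = j then (if v = a then p v else 0) else p v)" for l v
  have "(\<Sum>x\<in>seqset k X. if x j = a then pk k p x else 0) = (\<Sum>x\<in>seqset k X. \<Prod>l<k. f l (x l))"
  proof (rule sum.cong[OF refl])
    fix x assume "x \<in> seqset k X"
    have "(\<Prod>l<k. f l (x l)) = f j (x j) * (\<Prod>l\<in>{..<k}-{j}. f l (x l))"
      using j by (subst prod.remove[of _ j]) auto
    also have "(\<Prod>l\<in>{..<k}-{j}. f l (x l)) = (\<Prod>l\<in>{..<k}-{j}. p (x l))"
      by (rule prod.cong) (auto simp: f_def)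
    also have "f j (x j) * \<dots> = (if x j = a then pk k p x else 0)"
      using j by (auto simp: f_def pk_def prod.remove[of "{..<k}" j])
    finally show "(if x j = a then pk k p x else 0) = (\<Prod>l<k. f l (x l))" by simp
  qed
  also have "\<dots> = (\<Prod>l<k. \<Sum>v\<in>X. f l v)" by (rule sum_prod_seqset[OF fin])
  also have "\<dots> = (\<Sum>v\<in>X. f j v) * (\<Prod>l\<in>{..<k}-{j}. \<Sum>v\<in>X. f l v)"
    using j by (subst prod.remove[of _ j]) auto
  also have "(\<Prod>l\<in>{..<k}-{j}. \<Sum>v\<in>X. f l v) = 1"
    using s1 by (intro prod.neutral) (auto simp: f_def)
  also have "(\<Sum>v\<in>X. f j v) = (\<Sum>v\<in>X. if v = a then p a else 0)"
    by (intro sum.cong refl) (simp add: f_def)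
  also have "\<dots> = (if a \<in> X then p a else 0)"
    using fin by (simp add: sum.delta')
  finally show ?thesis by simp
qed

locale code_setup =
  fixes X :: "'x set" and Y :: "'y set" and p :: "'x \<Rightarrow> real"
    and k N :: nat and F :: "(nat \<Rightarrow> 'x) \<Rightarrow> nat" and G :: "nat \<Rightarrow> nat \<Rightarrow> 'y"
  assumes finX: "finite X" and finY: "finite Y" and p0: "\<And>a. a \<in> X \<Longrightarrow> 0 \<le> p a"
    and p1: "sum p X = 1" and kpos: "k > 0"
    and FN: "\<And>x. x \<in> seqset k X \<Longrightarrow> F x < N"
    and GY: "\<And>m j. m < N \<Longrightarrow> j < k \<Longrightarrow> G m j \<in> Y"
begin

abbreviation "Xk \<equiv> seqset k X"

definition W :: "nat \<Rightarrow> 'x \<Rightarrow> 'y \<Rightarrow> real" where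
  "W j a b = (\<Sum>x\<in>Xk. if x j = a \<and> G (F x) j = b then pk k p x else 0)"

definition col :: "nat \<Rightarrow> 'y \<Rightarrow> real" where
  "col j b = (\<Sum>a\<in>X. W j a b)"

definition J :: "'x \<Rightarrow> 'y \<Rightarrow> real" where
  "J a b = (1 / real k) * (\<Sum>j<k. W j a b)"

lemma finXk: "finite Xk" using finX by (rule finite_seqset)

lemma pk0: "x \<in> Xk \<Longrightarrow> 0 \<le> pk k p x" using p0 by (rule pk_nonneg)

lemma Xk_mem: "x \<in> Xk \<Longrightarrow> j < k \<Longrightarrow> x j \<in> X"
  unfolding seqset_def by (auto simp: PiE_iff)

lemma W0: "0 \<le> W j a b"
  unfolding W_def by (intro sum_nonneg) (auto simp: pk0)

lemma group:
  assumes j: "j < k"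
  shows "(\<Sum>a\<in>X. \<Sum>b\<in>Y. W j a b * L a b) = (\<Sum>x\<in>Xk. pk k p x * L (x j) (G (F x) j))"
proof -
  have "(\<Sum>a\<in>X. \<Sum>b\<in>Y. W j a b * L a b)
      = (\<Sum>a\<in>X. \<Sum>b\<in>Y. \<Sum>x\<in>Xk. if x j = a \<and> G (F x) j = b then pk k p x * L a b else 0)"
    unfolding W_def sum_distrib_right by (intro sum.cong refl) auto
  also have "\<dots> = (\<Sum>x\<in>Xk. \<Sum>a\<in>X. \<Sum>b\<in>Y. if x j = a \<and> G (F x) j = b then pk k p x * L a b else 0)"
    by (subst sum.swap, rule sum.cong[OF refl], rule sum.swap)
  also have "\<dots> = (\<Sum>x\<in>Xk. pk k p x * L (x j) (G (F x) j))"
  proof (rule sum.cong[OF refl])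
    fix x assume x: "x \<in> Xk"
    have xj: "x j \<in> X" using Xk_mem[OF x j] .
    have yj: "G (F x) j \<in> Y" using GY[OF FN[OF x] j] .
    have "(\<Sum>a\<in>X. \<Sum>b\<in>Y. if x j = a \<and> G (F x) j = b then pk k p x * L a b else 0)
        = (\<Sum>a\<in>X. if x j = a then (\<Sum>b\<in>Y. if G (F x) j = b then pk k p x * L a b else 0) else 0)"
      by (intro sum.cong refl) auto
    also have "\<dots> = (\<Sum>b\<in>Y. if G (F x) j = b then pk k p x * L (x j) b else 0)"
      using finX xj by (simp add: sum.delta)
    also have "\<dots> = pk k p x * L (x j) (G (F x) j)"
      using finY yj by (simp add: sum.delta)
    finally show "(\<Sum>a\<in>X. \<Sum>b\<in>Y. if x j = a \<and> G (F x) j = b then pk k p x * L a b else 0) = pk k p x * L (x j) (G (F x) j)" .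
  qed
  finally show ?thesis .
qed

lemma W_row:
  assumes j: "j < k" and a: "a \<in> X"
  shows "(\<Sum>b\<in>Y. W j a b) = p a"
proof -
  have "(\<Sum>b\<in>Y. W j a b) = (\<Sum>x\<in>Xk. \<Sum>b\<in>Y. if x j = a \<and> G (F x) j = b then pk k p x else 0)"
    unfolding W_def by (rule sum.swap)
  also have "\<dots> = (\<Sum>x\<in>Xk. if x j = a then pk k p x else 0)"
  proof (rule sum.cong[OF refl])
    fix x assume x: "x \<in> Xk"
    have yj: "G (F x) j \<in> Y" using GY[OF FN[OF x] j] .
    show "(\<Sum>b\<in>Y. if x j = a \<and> G (F x) j = b then pk k p x else 0) = (if x j = a then pk k p x else 0)"
      using finY yj by (auto simp: sum.delta)
  qed
  also have "\<dots> = p a" using marg_pk[OF finX p1 j] a by simp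
  finally show ?thesis .
qed

lemma W_le_p:
  assumes j: "j < k" and a: "a \<in> X" and b: "b \<in> Y"
  shows "W j a b \<le> p a"
proof -
  have "W j a b \<le> (\<Sum>b\<in>Y. W j a b)" using finY b W0 by (intro member_le_sum) auto
  then show ?thesis using W_row[OF j a] by simp
qed

lemma W_le_col:
  assumes a: "a \<in> X"
  shows "W j a b \<le> col j b"
  unfolding col_def using finX a W0 by (intro member_le_sum) auto

lemma pk_le_W:
  assumes x: "x \<in> Xk" and j: "j < k"
  shows "pk k p x \<le> W j (x j) (G (F x) j)"
proof -
  have "(\<lambda>x'. if x' j = x j \<and> G (F x') j = G (F x) j then pk k p x' else 0) x
     \<le> (\<Sum>x'\<in>Xk. if x' j = x j \<and> G (F x') j = G (F x) j then pk k p x' else 0)"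
    using finXk x pk0 by (intro member_le_sum) auto
  then show ?thesis unfolding W_def by simp
qed

definition MIT :: "real \<Rightarrow> real \<Rightarrow> real \<Rightarrow> real" where
  "MIT a r c = (if a = 0 then 0 else a * log 2 (a / (r * c)))"

lemma MIT_T: "MIT a r c = T a (r * c) / ln 2"
  by (simp add: MIT_def T_def log_def)

lemma T_scale: "s > 0 \<Longrightarrow> T (s * a) (s * b) = s * T a b"
  by (simp add: T_def)

lemma J_row: assumes a: "a \<in> X" shows "(\<Sum>b\<in>Y. J a b) = p a"
proof -
  have "(\<Sum>b\<in>Y. J a b) = (1 / real k) * (\<Sum>b\<in>Y. \<Sum>j<k. W j a b)"
    unfolding J_def by (rule sum_distrib_left[symmetric])
  also have "(\<Sum>b\<in>Y. \<Sum>j<k. W j a b) = (\<Sum>j<k. \<Sum>b\<in>Y. W j a b)" by (rule sum.swap)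
  also have "\<dots> = (\<Sum>j<k. p a)" using a by (intro sum.cong refl W_row) auto
  finally show ?thesis using kpos by simp
qed

lemma J_col: "(\<Sum>a\<in>X. J a b) = (1 / real k) * (\<Sum>j<k. col j b)"
proof -
  have "(\<Sum>a\<in>X. J a b) = (1 / real k) * (\<Sum>a\<in>X. \<Sum>j<k. W j a b)"
    unfolding J_def by (rule sum_distrib_left[symmetric])
  also have "(\<Sum>a\<in>X. \<Sum>j<k. W j a b) = (\<Sum>j<k. \<Sum>a\<in>X. W j a b)" by (rule sum.swap)
  finally show ?thesis unfolding col_def .
qed

lemma W_row_general: "j < k \<Longrightarrow> a \<in> X \<Longrightarrow> (\<Sum>b'\<in>Y. W j a b') = p a"
  by (rule W_row)

end

context code_setup begin
lemma stepA:
  "mutual_info X Y J \<le> (1 / real k) * (\<Sum>j<k. mutual_info X Y (W j))"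
proof -
  have pt: "MIT (J a b) (p a) ((1 / real k) * (\<Sum>j<k. col j b))
      \<le> (1 / real k) * (\<Sum>j<k. MIT (W j a b) (p a) (col j b))"
    if a: "a \<in> X" and b: "b \<in> Y" for a b
  proof -
    have le1: "T (\<Sum>j<k. W j a b) (\<Sum>j<k. p a * col j b) \<le> (\<Sum>j<k. T (W j a b) (p a * col j b))"
    proof (rule log_sum_ineq)
      fix j assume j: "j \<in> {..<k}"
      show "0 \<le> W j a b" by (rule W0)
      have "0 \<le> col j b" unfolding col_def by (intro sum_nonneg W0)
      then show "0 \<le> p a * col j b" using p0[OF a] by simp
      assume "0 < W j a b"
      then show "0 < p a * col j b"
        using W_le_p[of j a b] W_le_col[OF a, of j b] j a b by (auto intro: mult_pos_pos)
    qed simp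
    have "T (J a b) (p a * ((1 / real k) * (\<Sum>j<k. col j b)))
        = T ((1/real k) * (\<Sum>j<k. W j a b)) ((1/real k) * (\<Sum>j<k. p a * col j b))"
      unfolding J_def by (simp add: sum_distrib_left mult.left_commute)
    also have "\<dots> = (1/real k) * T (\<Sum>j<k. W j a b) (\<Sum>j<k. p a * col j b)"
      by (rule T_scale) (simp add: kpos)
    finally have "T (J a b) (p a * ((1 / real k) * (\<Sum>j<k. col j b))) \<le> (1/real k) * (\<Sum>j<k. T (W j a b) (p a * col j b))"
      by (rule ord_eq_le_trans) (rule mult_left_mono[OF le1], simp)
    then have "T (J a b) (p a * ((1 / real k) * (\<Sum>j<k. col j b))) / ln 2 \<le> ((1/real k) * (\<Sum>j<k. T (W j a b) (p a * col j b))) / ln 2"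
      by (rule divide_right_mono) simp
    then show ?thesis unfolding MIT_T sum_divide_distrib[symmetric] by (simp add: mult.commute)
  qed
  have "mutual_info X Y J = (\<Sum>a\<in>X. \<Sum>b\<in>Y. MIT (J a b) (p a) ((1 / real k) * (\<Sum>j<k. col j b)))"
    unfolding mutual_info_def MIT_def by (intro sum.cong refl) (simp only: J_row J_col)
  also have "\<dots> \<le> (\<Sum>a\<in>X. \<Sum>b\<in>Y. (1 / real k) * (\<Sum>j<k. MIT (W j a b) (p a) (col j b)))"
    by (intro sum_mono pt)
  also have "\<dots> = (1 / real k) * (\<Sum>a\<in>X. \<Sum>b\<in>Y. \<Sum>j<k. MIT (W j a b) (p a) (col j b))"
    by (simp add: sum_distrib_left)
  also have "(\<Sum>a\<in>X. \<Sum>b\<in>Y. \<Sum>j<k. MIT (W j a b) (p a) (col j b)) = (\<Sum>a\<in>X. \<Sum>j<k. \<Sum>b\<in>Y. MIT (W j a b) (p a) (col j b))"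
    by (intro sum.cong refl sum.swap)
  also have "\<dots> = (\<Sum>j<k. \<Sum>a\<in>X. \<Sum>b\<in>Y. MIT (W j a b) (p a) (col j b))"
    by (rule sum.swap)
  also have "(\<Sum>j<k. \<Sum>a\<in>X. \<Sum>b\<in>Y. MIT (W j a b) (p a) (col j b)) = (\<Sum>j<k. mutual_info X Y (W j))"
    unfolding mutual_info_def MIT_def col_def by (intro sum.cong refl) (simp add: W_row_general)
  finally show ?thesis .
qed

end

context code_setup begin

definition Lj :: "nat \<Rightarrow> 'x \<Rightarrow> 'y \<Rightarrow> real" where
  "Lj j a b = (if W j a b = 0 then 0 else ln (W j a b / (p a * col j b)))"

definition B :: "nat \<Rightarrow> 'x \<Rightarrow> 'y \<Rightarrow> real" where
  "B j a b = W j a b / col j b"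

definition A :: "(nat \<Rightarrow> 'x) \<Rightarrow> real" where
  "A x = (\<Prod>j<k. B j (x j) (G (F x) j))"

lemma col0: "0 \<le> col j b" unfolding col_def by (intro sum_nonneg W0)

lemma B0: "0 \<le> B j a b" unfolding B_def using W0 col0 by simp

lemma MI_W:
  assumes j: "j < k"
  shows "mutual_info X Y (W j) * ln 2 = (\<Sum>x\<in>Xk. pk k p x * Lj j (x j) (G (F x) j))"
proof -
  have "mutual_info X Y (W j) * ln 2 = (\<Sum>a\<in>X. \<Sum>b\<in>Y. W j a b * Lj j a b)"
  proof -
    have t: "(if W j a b = 0 then 0 else W j a b * log 2 (W j a b / ((\<Sum>b'\<in>Y. W j a b') * (\<Sum>a'\<in>X. W j a' b)))) = W j a b * Lj j a b / ln 2"
      if a: "a \<in> X" and b: "b \<in> Y" for a b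
    proof -
      have r: "(\<Sum>b'\<in>Y. W j a b') = p a" by (rule W_row[OF j a])
      have c: "(\<Sum>a'\<in>X. W j a' b) = col j b" by (simp add: col_def)
      show ?thesis unfolding r c by (simp add: Lj_def log_def)
    qed
    have "mutual_info X Y (W j) = (\<Sum>a\<in>X. \<Sum>b\<in>Y. W j a b * Lj j a b / ln 2)"
      unfolding mutual_info_def by (intro sum.cong refl) (rule t)
    also have "\<dots> = (\<Sum>a\<in>X. \<Sum>b\<in>Y. W j a b * Lj j a b) / ln 2"
      by (simp add: sum_divide_distrib)
    finally show ?thesis by simp
  qed
  also have "\<dots> = (\<Sum>x\<in>Xk. pk k p x * Lj j (x j) (G (F x) j))" by (rule group[OF j])
  finally show ?thesis .
qed

lemma sumL:
  assumes x: "x \<in> Xk" and pos: "pk k p x > 0"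
  shows "(\<Sum>j<k. Lj j (x j) (G (F x) j)) = ln (A x / pk k p x)"
proof -
  have Wp: "W j (x j) (G (F x) j) > 0" if "j < k" for j
    using pk_le_W[OF x that] pos by linarith
  have pp: "p (x j) > 0" if j: "j < k" for j
    using W_le_p[OF j Xk_mem[OF x j] GY[OF FN[OF x] j]] Wp[OF j] by linarith
  have cp: "col j (G (F x) j) > 0" if j: "j < k" for j
    using W_le_col[OF Xk_mem[OF x j]] Wp[OF j] by (meson less_le_trans)
  have eA: "(\<Sum>j<k. ln (B j (x j) (G (F x) j))) = ln (A x)"
    unfolding A_def
  proof (rule ln_prod[symmetric])
    fix i assume "i \<in> {..<k}"
    then have i: "i < k" by simp
    show "B i (x i) (G (F x) i) \<noteq> 0" using Wp[OF i] cp[OF i] by (simp add: B_def)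
  qed simp
  have eP: "(\<Sum>j<k. ln (p (x j))) = ln (pk k p x)"
    unfolding pk_def
  proof (rule ln_prod[symmetric])
    fix i assume "i \<in> {..<k}"
    then have i: "i < k" by simp
    show "p (x i) \<noteq> 0" using pp[OF i] by simp
  qed simp
  have "(\<Sum>j<k. Lj j (x j) (G (F x) j)) = (\<Sum>j<k. ln (B j (x j) (G (F x) j)) - ln (p (x j)))"
  proof (rule sum.cong[OF refl])
    fix j assume "j \<in> {..<k}"
    then have j: "j < k" by simp
    show "Lj j (x j) (G (F x) j) = ln (B j (x j) (G (F x) j)) - ln (p (x j))"
      using Wp[OF j] pp[OF j] cp[OF j] by (simp add: Lj_def B_def ln_div ln_mult)
  qed
  also have "\<dots> = (\<Sum>j<k. ln (B j (x j) (G (F x) j))) - (\<Sum>j<k. ln (p (x j)))"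
    by (rule sum_subtractf)
  also have "\<dots> = ln (A x) - ln (pk k p x)" by (simp only: eA eP)
  also have "\<dots> = ln (A x / pk k p x)"
  proof -
    have "A x > 0" unfolding A_def B_def using Wp cp by (intro prod_pos) auto
    then show ?thesis using pos by (simp add: ln_div)
  qed
  finally show ?thesis .
qed

lemma sumA: "(\<Sum>x\<in>Xk. A x) \<le> real N"
proof -
  have "(\<Sum>x\<in>Xk. A x) \<le> (\<Sum>x\<in>Xk. \<Sum>m<N. \<Prod>j<k. B j (x j) (G m j))"
  proof (rule sum_mono)
    fix x assume x: "x \<in> Xk"
    have "A x = (\<lambda>m. \<Prod>j<k. B j (x j) (G m j)) (F x)" unfolding A_def by simp
    also have "\<dots> \<le> (\<Sum>m<N. \<Prod>j<k. B j (x j) (G m j))"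
      using FN[OF x] by (intro member_le_sum) (auto intro: prod_nonneg B0)
    finally show "A x \<le> (\<Sum>m<N. \<Prod>j<k. B j (x j) (G m j))" .
  qed
  also have "\<dots> = (\<Sum>m<N. \<Sum>x\<in>Xk. \<Prod>j<k. B j (x j) (G m j))" by (rule sum.swap)
  also have "\<dots> = (\<Sum>m<N. \<Prod>j<k. \<Sum>a\<in>X. B j a (G m j))"
    by (intro sum.cong refl sum_prod_seqset finX)
  also have "\<dots> \<le> (\<Sum>m<N. 1)"
  proof (intro sum_mono prod_le_1 conjI)
    fix m j
    show "0 \<le> (\<Sum>a\<in>X. B j a (G m j))" by (intro sum_nonneg B0)
    have "(\<Sum>a\<in>X. B j a (G m j)) = col j (G m j) / col j (G m j)"
      unfolding B_def col_def by (rule sum_divide_distrib[symmetric])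
    then show "(\<Sum>a\<in>X. B j a (G m j)) \<le> 1" by (cases "col j (G m j) = 0") simp_all
  qed
  finally show ?thesis by simp
qed

lemma stepB: "(\<Sum>j<k. mutual_info X Y (W j)) \<le> log 2 (real N)"
proof -
  have "(\<Sum>j<k. mutual_info X Y (W j)) * ln 2 = (\<Sum>j<k. \<Sum>x\<in>Xk. pk k p x * Lj j (x j) (G (F x) j))"
    by (simp add: sum_distrib_right MI_W)
  also have "\<dots> = (\<Sum>x\<in>Xk. \<Sum>j<k. pk k p x * Lj j (x j) (G (F x) j))" by (rule sum.swap)
  also have "\<dots> = (\<Sum>x\<in>Xk. if pk k p x = 0 then 0 else pk k p x * ln (A x / pk k p x))"
  proof (rule sum.cong[OF refl])
    fix x assume x: "x \<in> Xk"
    show "(\<Sum>j<k. pk k p x * Lj j (x j) (G (F x) j)) = (if pk k p x = 0 then 0 else pk k p x * ln (A x / pk k p x))"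
    proof (cases "pk k p x = 0")
      case True then show ?thesis by simp
    next
      case False
      then have "pk k p x > 0" using pk0[OF x] by simp
      then show ?thesis using False sumL[OF x] by (simp add: sum_distrib_left[symmetric])
    qed
  qed
  also have "\<dots> \<le> ln (\<Sum>x\<in>Xk. A x)"
  proof (rule gibbs_ln[OF finXk])
    show "sum (pk k p) Xk = 1" by (rule sum_pk[OF finX p1])
    fix x assume x: "x \<in> Xk"
    show "0 \<le> pk k p x" by (rule pk0[OF x])
    show "0 \<le> A x" unfolding A_def by (intro prod_nonneg B0)
    assume pos: "0 < pk k p x"
    have Wp: "W j (x j) (G (F x) j) > 0" if "j < k" for j
      using pk_le_W[OF x that] pos by linarith
    have cp: "col j (G (F x) j) > 0" if j: "j < k" for j
      using W_le_col[OF Xk_mem[OF x j]] Wp[OF j] by (meson less_le_trans)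
    show "0 < A x" unfolding A_def B_def using Wp cp by (intro prod_pos) auto
  qed
  also have "\<dots> \<le> ln (real N)"
  proof -
    have "sum (pk k p) Xk = 1" by (rule sum_pk[OF finX p1])
    then obtain x where x: "x \<in> Xk" "pk k p x \<noteq> 0" by (metis sum.neutral zero_neq_one)
    then have pos: "pk k p x > 0" using pk0 by (simp add: order_le_neq_trans)
    have Wp: "W j (x j) (G (F x) j) > 0" if "j < k" for j
      using pk_le_W[OF x(1) that] pos by linarith
    have cp: "col j (G (F x) j) > 0" if j: "j < k" for j
      using W_le_col[OF Xk_mem[OF x(1) j]] Wp[OF j] by (meson less_le_trans)
    have "A x > 0" unfolding A_def B_def using Wp cp by (intro prod_pos) auto
    moreover have "A x \<le> (\<Sum>x\<in>Xk. A x)"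
      using finXk x by (intro member_le_sum) (auto simp: A_def intro: prod_nonneg B0)
    ultimately have "(\<Sum>x\<in>Xk. A x) > 0" by linarith
    then show ?thesis using sumA by simp
  qed
  finally show ?thesis by (simp add: log_def pos_le_divide_eq)
qed

theorem converse_info: "mutual_info X Y J \<le> log 2 (real N) / real k"
proof -
  have "mutual_info X Y J \<le> (1 / real k) * (\<Sum>j<k. mutual_info X Y (W j))" by (rule stepA)
  also have "\<dots> \<le> (1 / real k) * log 2 (real N)" by (intro mult_left_mono stepB) simp
  finally show ?thesis by simp
qed

end

locale rdp =
  fixes pS :: "('i::finite \<Rightarrow> 'a) \<Rightarrow> real" and Sa :: "'i \<Rightarrow> 'a set" and Rh :: "'i \<Rightarrow> 'b set"
    and E :: "'i set" and d :: "'i \<Rightarrow> 'a \<Rightarrow> 'b \<Rightarrow> real"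
  assumes fin_S: "\<And>i. finite (Sa i)" and fin_R: "\<And>i. finite (Rh i)" and ne_R: "\<And>i. Rh i \<noteq> {}"
    and pmf: "pS \<in> prob_simplex (Pi\<^sub>E UNIV Sa)"
    and d_nonneg: "\<And>i a b. a \<in> Sa i \<Longrightarrow> b \<in> Rh i \<Longrightarrow> 0 \<le> d i a b"
begin

abbreviation "US \<equiv> Pi\<^sub>E (UNIV::'i set) Sa"
abbreviation "XS \<equiv> Pi\<^sub>E E Sa"
abbreviation "YS \<equiv> Pi\<^sub>E (UNIV::'i set) Rh"
abbreviation "pE \<equiv> marg_E pS Sa E"

definition Afib :: "('i \<Rightarrow> 'a) \<Rightarrow> ('i \<Rightarrow> 'a) set" where
  "Afib x = {a \<in> US. restrict a E = x}"

definition cst :: "'i \<Rightarrow> ('i \<Rightarrow> 'a) \<Rightarrow> 'b \<Rightarrow> real" where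
  "cst i x b = (if i \<in> E then d i (x i) b else hat_d pS Sa E d i x b)"

lemma finUS: "finite US" by (intro finite_PiE fin_S) simp
lemma finXS: "finite XS" by (intro finite_PiE fin_S) simp
lemma finYS: "finite YS" by (intro finite_PiE fin_R) simp

lemma pS0: "0 \<le> pS a" using pmf by (simp add: prob_simplex_def)
lemma pS_out: "a \<notin> US \<Longrightarrow> pS a = 0" using pmf by (simp add: prob_simplex_def)
lemma pS1: "sum pS US = 1" using pmf by (simp add: prob_simplex_def)

lemma pE_fib: "pE x = sum pS (Afib x)"
  unfolding marg_E_def Afib_def using finUS by (simp add: sum.inter_filter)

lemma pE0: "0 \<le> pE x" unfolding pE_fib by (intro sum_nonneg pS0)

lemma restrict_XS: "a \<in> US \<Longrightarrow> restrict a E \<in> XS" by auto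

lemma group_US: "(\<Sum>a\<in>US. h a) = (\<Sum>x\<in>XS. \<Sum>a\<in>Afib x. h a)"
  unfolding Afib_def
  by (rule sum.group[symmetric, OF finUS finXS]) auto

lemma pE1: "sum pE XS = 1"
  using pS1 unfolding pE_fib group_US[of pS] by simp

lemma pE_out: "x \<notin> XS \<Longrightarrow> pE x = 0"
  unfolding pE_fib Afib_def using restrict_XS by (intro sum.neutral) auto

lemma cond_num_le:
  "(\<Sum>s\<in>US. if s i = a \<and> restrict s E = x then pS s else 0) \<le> pE x"
  unfolding marg_E_def by (intro sum_mono) (auto simp: pS0)

lemma pE_cond: "pE x * cond_i pS Sa E i a x = (\<Sum>s\<in>US. if s i = a \<and> restrict s E = x then pS s else 0)"
proof (cases "pE x = 0")
  case True
  have "0 \<le> (\<Sum>s\<in>US. if s i = a \<and> restrict s E = x then pS s else 0)" by (intro sum_nonneg) (auto simp: pS0)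
  then show ?thesis using True cond_num_le[of i a x] by simp
next
  case False then show ?thesis by (simp add: cond_i_def)
qed

lemma cst_fib:
  assumes x: "x \<in> XS"
  shows "(\<Sum>a\<in>Afib x. pS a * d i (a i) b) = pE x * cst i x b"
proof (cases "i \<in> E")
  case True
  have "(\<Sum>a\<in>Afib x. pS a * d i (a i) b) = (\<Sum>a\<in>Afib x. pS a * d i (x i) b)"
  proof (rule sum.cong[OF refl])
    fix a assume "a \<in> Afib x"
    then have "restrict a E = x" by (simp add: Afib_def)
    then have "a i = x i" using True by (metis restrict_apply')
    then show "pS a * d i (a i) b = pS a * d i (x i) b" by simp
  qed
  also have "\<dots> = pE x * cst i x b" using True by (simp add: cst_def pE_fib sum_distrib_right)
  finally show ?thesis .
next
  case False
  have "pE x * cst i x b = (\<Sum>a'\<in>Sa i. (pE x * cond_i pS Sa E i a' x) * d i a' b)"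
    using False by (simp add: cst_def hat_d_def sum_distrib_left mult.assoc)
  also have "\<dots> = (\<Sum>a'\<in>Sa i. \<Sum>s\<in>US. if s i = a' \<and> restrict s E = x then pS s * d i a' b else 0)"
    unfolding pE_cond sum_distrib_right by (intro sum.cong refl) auto
  also have "\<dots> = (\<Sum>s\<in>US. \<Sum>a'\<in>Sa i. if s i = a' \<and> restrict s E = x then pS s * d i a' b else 0)"
    by (rule sum.swap)
  also have "\<dots> = (\<Sum>s\<in>US. if restrict s E = x then pS s * d i (s i) b else 0)"
  proof (rule sum.cong[OF refl])
    fix s assume s: "s \<in> US"
    then have "s i \<in> Sa i" by auto
    then show "(\<Sum>a'\<in>Sa i. if s i = a' \<and> restrict s E = x then pS s * d i a' b else 0) = (if restrict s E = x then pS s * d i (s i) b else 0)"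
      using fin_S[of i] by (auto simp: sum.delta)
  qed
  also have "\<dots> = (\<Sum>a\<in>Afib x. pS a * d i (a i) b)"
    unfolding Afib_def using finUS by (simp add: sum.inter_filter)
  finally show ?thesis by simp
qed

lemma hat_d0: "0 \<le> hat_d pS Sa E d i x b" if "b \<in> Rh i"
proof -
  have "0 \<le> cond_i pS Sa E i a x" for a
    unfolding cond_i_def using pE0[of x] by (auto intro!: divide_nonneg_nonneg sum_nonneg simp: pS0)
  then show ?thesis unfolding hat_d_def using d_nonneg that by (auto intro!: sum_nonneg)
qed

lemma cst0: "x \<in> XS \<Longrightarrow> b \<in> Rh i \<Longrightarrow> 0 \<le> cst i x b"
  unfolding cst_def using d_nonneg hat_d0 by (auto simp: PiE_iff)

definition Cost :: "(('i \<Rightarrow> 'a) \<Rightarrow> ('i \<Rightarrow> 'b) \<Rightarrow> real) \<Rightarrow> 'i \<Rightarrow> real" where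
  "Cost Q i = (\<Sum>x\<in>XS. \<Sum>t\<in>YS. pE x * Q x t * cst i x (t i))"

definition RM :: "(('i \<Rightarrow> 'a) \<Rightarrow> ('i \<Rightarrow> 'b) \<Rightarrow> real) \<Rightarrow> 'i \<Rightarrow> 'b \<Rightarrow> real" where
  "RM Q i b = (\<Sum>x\<in>XS. \<Sum>t\<in>YS. if t i = b then pE x * Q x t else 0)"

lemma exp_dist_Cost: "i \<in> E \<Longrightarrow> exp_dist pS Sa Rh E Q d i = Cost Q i"
proof -
  assume i: "i \<in> E"
  have "exp_dist pS Sa Rh E Q d i = (\<Sum>x\<in>XS. \<Sum>a\<in>Afib x. \<Sum>t\<in>YS. pS a * Q (restrict a E) t * d i (a i) (t i))"
    unfolding exp_dist_def by (rule group_US)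
  also have "\<dots> = (\<Sum>x\<in>XS. \<Sum>t\<in>YS. Q x t * (\<Sum>a\<in>Afib x. pS a * d i (a i) (t i)))"
  proof (intro sum.cong refl)
    fix x assume x: "x \<in> XS"
    have "(\<Sum>a\<in>Afib x. \<Sum>t\<in>YS. pS a * Q (restrict a E) t * d i (a i) (t i)) = (\<Sum>a\<in>Afib x. \<Sum>t\<in>YS. Q x t * (pS a * d i (a i) (t i)))"
      by (intro sum.cong refl) (auto simp: Afib_def)
    also have "\<dots> = (\<Sum>t\<in>YS. Q x t * (\<Sum>a\<in>Afib x. pS a * d i (a i) (t i)))"
      by (subst sum.swap) (simp add: sum_distrib_left)
    finally show "(\<Sum>a\<in>Afib x. \<Sum>t\<in>YS. pS a * Q (restrict a E) t * d i (a i) (t i)) = (\<Sum>t\<in>YS. Q x t * (\<Sum>a\<in>Afib x. pS a * d i (a i) (t i)))" .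
  qed
  also have "\<dots> = Cost Q i"
    unfolding Cost_def by (intro sum.cong refl) (simp add: cst_fib)
  finally show ?thesis .
qed

lemma exp_hat_dist_Cost: "i \<notin> E \<Longrightarrow> exp_hat_dist pS Sa Rh E Q d i = Cost Q i"
  unfolding exp_hat_dist_def Cost_def cst_def by simp

lemma recon_marg_RM: "recon_marg pS Sa Rh E Q i b = RM Q i b"
proof -
  have "recon_marg pS Sa Rh E Q i b = (\<Sum>x\<in>XS. \<Sum>a\<in>Afib x. \<Sum>t\<in>YS. if t i = b then pS a * Q (restrict a E) t else 0)"
    unfolding recon_marg_def by (rule group_US)
  also have "\<dots> = (\<Sum>x\<in>XS. \<Sum>a\<in>Afib x. \<Sum>t\<in>YS. if t i = b then pS a * Q x t else 0)"
    by (intro sum.cong refl) (auto simp: Afib_def)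
  also have "\<dots> = (\<Sum>x\<in>XS. \<Sum>t\<in>YS. \<Sum>a\<in>Afib x. if t i = b then pS a * Q x t else 0)"
    by (intro sum.cong refl sum.swap)
  also have "\<dots> = RM Q i b"
    unfolding RM_def pE_fib by (intro sum.cong refl) (simp add: sum_distrib_right)
  finally show ?thesis .
qed

end

context rdp begin

lemma seqs_eq: "seqs Sa k = seqset k US" by (simp add: seqs_def seqset_def)
lemma seq_prob_eq: "seq_prob pS k s = pk k pS s" by (simp add: seq_prob_def pk_def)

lemma enc_mem: "s \<in> seqs Sa k \<Longrightarrow> enc_input E k s \<in> seqset k XS"
  unfolding seqs_def seqset_def enc_input_def by (auto simp: PiE_iff)

lemma enc_fiber:
  assumes x: "x \<in> seqset k XS"
  shows "{s \<in> seqs Sa k. enc_input E k s = x} = Pi\<^sub>E {..<k} (\<lambda>l. Afib (x l))"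
proof (intro set_eqI iffI)
  fix s assume "s \<in> {s \<in> seqs Sa k. enc_input E k s = x}"
  then have s: "s \<in> seqs Sa k" and e: "enc_input E k s = x" by auto
  have "restrict (s l) E = x l" if "l < k" for l
    using e that unfolding enc_input_def by (metis lessThan_iff restrict_apply')
  then show "s \<in> Pi\<^sub>E {..<k} (\<lambda>l. Afib (x l))"
    using s unfolding seqs_def Afib_def by (auto simp: PiE_iff)
next
  fix s assume s: "s \<in> Pi\<^sub>E {..<k} (\<lambda>l. Afib (x l))"
  then have "s \<in> seqs Sa k" unfolding seqs_def Afib_def by (auto simp: PiE_iff)
  moreover have "enc_input E k s = x"
  proof
    fix l show "enc_input E k s l = x l"
    proof (cases "l < k")
      case True then show ?thesis using s unfolding enc_input_def Afib_def by (auto simp: PiE_iff)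
    next
      case False then show ?thesis using x unfolding enc_input_def seqset_def by (auto simp: PiE_iff extensional_def)
    qed
  qed
  ultimately show "s \<in> {s \<in> seqs Sa k. enc_input E k s = x}" by simp
qed

lemma finite_Afib: "finite (Afib x)" unfolding Afib_def using finUS by simp

lemma seq_group_gen:
  fixes h :: "nat \<Rightarrow> ('i \<Rightarrow> 'a) \<Rightarrow> (nat \<Rightarrow> 'i \<Rightarrow> 'a) \<Rightarrow> real"
  shows "(\<Sum>s\<in>seqs Sa k. (\<Prod>l<k. h l (s l) (enc_input E k s)) * \<Phi> (enc_input E k s))
   = (\<Sum>x\<in>seqset k XS. (\<Prod>l<k. \<Sum>a\<in>Afib (x l). h l a x) * \<Phi> x)"
proof -
  have fs: "finite (seqs Sa k)" unfolding seqs_eq by (rule finite_seqset[OF finUS])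
  have "(\<Sum>s\<in>seqs Sa k. (\<Prod>l<k. h l (s l) (enc_input E k s)) * \<Phi> (enc_input E k s))
      = (\<Sum>x\<in>seqset k XS. \<Sum>s\<in>{s \<in> seqs Sa k. enc_input E k s = x}. (\<Prod>l<k. h l (s l) (enc_input E k s)) * \<Phi> (enc_input E k s))"
    by (rule sum.group[symmetric, OF fs finite_seqset[OF finXS]]) (auto intro: enc_mem)
  also have "\<dots> = (\<Sum>x\<in>seqset k XS. \<Sum>s\<in>Pi\<^sub>E {..<k} (\<lambda>l. Afib (x l)). (\<Prod>l<k. h l (s l) x) * \<Phi> x)"
  proof (rule sum.cong[OF refl])
    fix x assume x: "x \<in> seqset k XS"
    show "(\<Sum>s\<in>{s \<in> seqs Sa k. enc_input E k s = x}. (\<Prod>l<k. h l (s l) (enc_input E k s)) * \<Phi> (enc_input E k s))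
        = (\<Sum>s\<in>Pi\<^sub>E {..<k} (\<lambda>l. Afib (x l)). (\<Prod>l<k. h l (s l) x) * \<Phi> x)"
      unfolding enc_fiber[OF x, symmetric] by (intro sum.cong refl) auto
  qed
  also have "\<dots> = (\<Sum>x\<in>seqset k XS. (\<Prod>l<k. \<Sum>a\<in>Afib (x l). h l a x) * \<Phi> x)"
  proof (rule sum.cong[OF refl])
    fix x assume "x \<in> seqset k XS"
    have "(\<Sum>s\<in>Pi\<^sub>E {..<k} (\<lambda>l. Afib (x l)). \<Prod>l<k. h l (s l) x) = (\<Prod>l<k. \<Sum>a\<in>Afib (x l). h l a x)"
      using prod_sum_PiE[where A="{..<k}" and B="\<lambda>l. Afib (x l)" and f="\<lambda>l a. h l a x"] by (simp add: finite_Afib)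
    then show "(\<Sum>s\<in>Pi\<^sub>E {..<k} (\<lambda>l. Afib (x l)). (\<Prod>l<k. h l (s l) x) * \<Phi> x) = (\<Prod>l<k. \<Sum>a\<in>Afib (x l). h l a x) * \<Phi> x"
      by (simp add: sum_distrib_right[symmetric])
  qed
  finally show ?thesis .
qed

lemma seq_group1:
  "(\<Sum>s\<in>seqs Sa k. seq_prob pS k s * \<Phi> (enc_input E k s)) = (\<Sum>x\<in>seqset k XS. pk k pE x * \<Phi> x)"
  using seq_group_gen[where k=k and h="\<lambda>_ a _. pS a" and \<Phi>=\<Phi>] unfolding seq_prob_eq pk_def pE_fib by simp

lemma seq_group2:
  assumes j: "j < k"
  shows "(\<Sum>s\<in>seqs Sa k. seq_prob pS k s * \<Psi> (s j) (enc_input E k s))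
    = (\<Sum>x\<in>seqset k XS. (\<Prod>l\<in>{..<k}-{j}. pE (x l)) * (\<Sum>a\<in>Afib (x j). pS a * \<Psi> a x))"
proof -
  define h where "h l a x = (if l = j then pS a * \<Psi> a x else pS a)" for l a x
  have "(\<Sum>s\<in>seqs Sa k. seq_prob pS k s * \<Psi> (s j) (enc_input E k s))
      = (\<Sum>s\<in>seqs Sa k. (\<Prod>l<k. h l (s l) (enc_input E k s)) * 1)"
  proof (rule sum.cong[OF refl])
    fix s assume "s \<in> seqs Sa k"
    have "(\<Prod>l<k. h l (s l) (enc_input E k s)) = h j (s j) (enc_input E k s) * (\<Prod>l\<in>{..<k}-{j}. h l (s l) (enc_input E k s))"
      using j by (subst prod.remove[of _ j]) auto
    also have "(\<Prod>l\<in>{..<k}-{j}. h l (s l) (enc_input E k s)) = (\<Prod>l\<in>{..<k}-{j}. pS (s l))"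
      by (intro prod.cong refl) (auto simp: h_def)
    also have "h j (s j) (enc_input E k s) * (\<Prod>l\<in>{..<k}-{j}. pS (s l)) = seq_prob pS k s * \<Psi> (s j) (enc_input E k s)"
      using j by (simp add: h_def seq_prob_def prod.remove[of "{..<k}" j])
    finally show "seq_prob pS k s * \<Psi> (s j) (enc_input E k s) = (\<Prod>l<k. h l (s l) (enc_input E k s)) * 1"
      by simp
  qed
  also have "\<dots> = (\<Sum>x\<in>seqset k XS. (\<Prod>l<k. \<Sum>a\<in>Afib (x l). h l a x) * 1)"
    by (rule seq_group_gen)
  also have "\<dots> = (\<Sum>x\<in>seqset k XS. (\<Prod>l\<in>{..<k}-{j}. pE (x l)) * (\<Sum>a\<in>Afib (x j). pS a * \<Psi> a x))"
  proof (rule sum.cong[OF refl])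
    fix x assume "x \<in> seqset k XS"
    have "(\<Prod>l<k. \<Sum>a\<in>Afib (x l). h l a x) = (\<Sum>a\<in>Afib (x j). h j a x) * (\<Prod>l\<in>{..<k}-{j}. \<Sum>a\<in>Afib (x l). h l a x)"
      using j by (subst prod.remove[of _ j]) auto
    also have "(\<Prod>l\<in>{..<k}-{j}. \<Sum>a\<in>Afib (x l). h l a x) = (\<Prod>l\<in>{..<k}-{j}. pE (x l))"
      by (intro prod.cong refl) (auto simp: h_def pE_fib)
    finally show "(\<Prod>l<k. \<Sum>a\<in>Afib (x l). h l a x) * 1 = (\<Prod>l\<in>{..<k}-{j}. pE (x l)) * (\<Sum>a\<in>Afib (x j). pS a * \<Psi> a x)"
      by (simp add: h_def)
  qed
  finally show ?thesis .
qed

lemma pk_remove: "j < k \<Longrightarrow> pk k pE x = (\<Prod>l\<in>{..<k}-{j}. pE (x l)) * pE (x j)"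
  unfolding pk_def by (subst prod.remove[of _ j]) auto

lemma code_dist_eq:
  assumes k: "k > 0"
  shows "code_dist pS Sa E d k f g i = (1 / real k) * (\<Sum>j<k. \<Sum>x\<in>seqset k XS. pk k pE x * cst i (x j) (g (f x) j i))"
proof -
  have "code_dist pS Sa E d k f g i = (1 / real k) * (\<Sum>j<k. \<Sum>s\<in>seqs Sa k. seq_prob pS k s * d i (s j i) (g (f (enc_input E k s)) j i))"
    unfolding code_dist_def by (simp add: sum_distrib_left sum_divide_distrib sum.swap[of _ "{..<k}"] mult.commute)
  also have "(\<Sum>j<k. \<Sum>s\<in>seqs Sa k. seq_prob pS k s * d i (s j i) (g (f (enc_input E k s)) j i))
      = (\<Sum>j<k. \<Sum>x\<in>seqset k XS. pk k pE x * cst i (x j) (g (f x) j i))"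
  proof (rule sum.cong[OF refl])
    fix j assume "j \<in> {..<k}"
    then have j: "j < k" by simp
    have "(\<Sum>s\<in>seqs Sa k. seq_prob pS k s * d i (s j i) (g (f (enc_input E k s)) j i))
       = (\<Sum>x\<in>seqset k XS. (\<Prod>l\<in>{..<k}-{j}. pE (x l)) * (\<Sum>a\<in>Afib (x j). pS a * d i (a i) (g (f x) j i)))"
      by (rule seq_group2[OF j, of "\<lambda>a x. d i (a i) (g (f x) j i)"])
    also have "\<dots> = (\<Sum>x\<in>seqset k XS. pk k pE x * cst i (x j) (g (f x) j i))"
    proof (rule sum.cong[OF refl])
      fix x assume x: "x \<in> seqset k XS"
      have xj: "x j \<in> XS" using x j by (auto simp: seqset_def PiE_iff)
      show "(\<Prod>l\<in>{..<k}-{j}. pE (x l)) * (\<Sum>a\<in>Afib (x j). pS a * d i (a i) (g (f x) j i)) = pk k pE x * cst i (x j) (g (f x) j i)"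
        unfolding cst_fib[OF xj] pk_remove[OF j] by simp
    qed
    finally show "(\<Sum>s\<in>seqs Sa k. seq_prob pS k s * d i (s j i) (g (f (enc_input E k s)) j i)) = (\<Sum>x\<in>seqset k XS. pk k pE x * cst i (x j) (g (f x) j i))" .
  qed
  finally show ?thesis .
qed

lemma code_recon_eq:
  "code_recon_marg pS Sa E k f g i b = (1 / real k) * (\<Sum>j<k. \<Sum>x\<in>seqset k XS. pk k pE x * (if g (f x) j i = b then 1 else 0))"
proof -
  have "code_recon_marg pS Sa E k f g i b = (1 / real k) * (\<Sum>j<k. \<Sum>s\<in>seqs Sa k. seq_prob pS k s * (\<lambda>x. if g (f x) j i = b then 1 else 0) (enc_input E k s))"
    unfolding code_recon_marg_def by (intro arg_cong[where f="\<lambda>t. _ * t"] sum.cong refl) auto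
  also have "\<dots> = (1 / real k) * (\<Sum>j<k. \<Sum>x\<in>seqset k XS. pk k pE x * (if g (f x) j i = b then 1 else 0))"
    by (subst seq_group1) simp
  finally show ?thesis .
qed

end

context code_setup begin

lemma W_out: "j < k \<Longrightarrow> b \<notin> Y \<Longrightarrow> W j a b = 0"
  unfolding W_def using GY FN by (intro sum.neutral) fastforce

lemma J0: "0 \<le> J a b" unfolding J_def by (intro mult_nonneg_nonneg sum_nonneg W0) simp

lemma J_out: "b \<notin> Y \<Longrightarrow> J a b = 0" unfolding J_def by (simp add: W_out)

lemma J_p0: assumes a: "a \<in> X" and pa: "p a = 0" shows "J a b = 0"
proof (cases "b \<in> Y")
  case True
  have "W j a b = 0" if "j < k" for j using W_le_p[OF that a True] W0[of j a b] pa by simp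
  then show ?thesis unfolding J_def by simp
qed (simp add: J_out)

lemma J_group:
  "(\<Sum>a\<in>X. \<Sum>b\<in>Y. J a b * L a b) = (1 / real k) * (\<Sum>j<k. \<Sum>x\<in>Xk. pk k p x * L (x j) (G (F x) j))"
proof -
  have "(\<Sum>a\<in>X. \<Sum>b\<in>Y. J a b * L a b) = (1 / real k) * (\<Sum>a\<in>X. \<Sum>b\<in>Y. \<Sum>j<k. W j a b * L a b)"
    unfolding J_def by (simp add: sum_distrib_left sum_distrib_right mult.assoc)
  also have "(\<Sum>a\<in>X. \<Sum>b\<in>Y. \<Sum>j<k. W j a b * L a b) = (\<Sum>a\<in>X. \<Sum>j<k. \<Sum>b\<in>Y. W j a b * L a b)"
    by (intro sum.cong refl sum.swap)
  also have "\<dots> = (\<Sum>j<k. \<Sum>a\<in>X. \<Sum>b\<in>Y. W j a b * L a b)" by (rule sum.swap)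
  also have "\<dots> = (\<Sum>j<k. \<Sum>x\<in>Xk. pk k p x * L (x j) (G (F x) j))"
    by (intro sum.cong refl group) auto
  finally show ?thesis .
qed

end

context rdp begin

definition t0 :: "'i \<Rightarrow> 'b" where "t0 = (\<lambda>i. SOME b. b \<in> Rh i)"

lemma t0: "t0 \<in> YS" unfolding t0_def using ne_R by (auto simp: some_in_eq)

lemma pk_pos_fiber:
  assumes x: "x \<in> seqset k XS" and pos: "pk k pE x > 0"
  shows "\<exists>s\<in>seqs Sa k. enc_input E k s = x"
proof -
  have "pE (x l) \<noteq> 0" if "l < k" for l
  proof
    assume "pE (x l) = 0"
    then have "pk k pE x = 0" unfolding pk_def using that by (intro prod_zero) auto
    with pos show False by simp
  qed
  then have "Afib (x l) \<noteq> {}" if "l < k" for l using that pE_fib by force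
  then have "Pi\<^sub>E {..<k} (\<lambda>l. Afib (x l)) \<noteq> {}" by (simp add: PiE_eq_empty_iff)
  then obtain s where "s \<in> {s \<in> seqs Sa k. enc_input E k s = x}" unfolding enc_fiber[OF x] by blast
  then show ?thesis by blast
qed

lemma converse_one:
  assumes cv: "code_valid Sa Rh E k N f g" and kpos: "k > 0"
  shows "\<exists>Q. test_channel Sa Rh E Q
     \<and> (\<forall>i. Cost Q i = code_dist pS Sa E d k f g i)
     \<and> (\<forall>i b. RM Q i b = code_recon_marg pS Sa E k f g i b)
     \<and> info_SE_hat pS Sa Rh E Q \<le> log 2 (real N) / real k"
proof -
  define F' where "F' x = (if f x < N then f x else 0)" for x
  have N1: "1 \<le> N" using cv by (simp add: code_valid_def)
  interpret C: code_setup XS YS pE k N F' g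
  proof
    show "finite XS" by (rule finXS)
    show "finite YS" by (rule finYS)
    show "\<And>a. 0 \<le> pE a" by (rule pE0)
    show "sum pE XS = 1" by (rule pE1)
    show "0 < k" by (rule kpos)
    show "\<And>x. F' x < N" using N1 by (simp add: F'_def)
    show "\<And>m j. m < N \<Longrightarrow> j < k \<Longrightarrow> g m j \<in> YS" using cv by (auto simp: code_valid_def)
  qed
  have F'f: "pk k pE x * \<Phi> (F' x) = pk k pE x * \<Phi> (f x)" if x: "x \<in> seqset k XS" for x and \<Phi> :: "nat \<Rightarrow> real"
  proof (cases "pk k pE x > 0")
    case True
    then obtain s where "s \<in> seqs Sa k" "enc_input E k s = x" using pk_pos_fiber[OF x] by blast
    then have "f x < N" using cv by (auto simp: code_valid_def)
    then show ?thesis by (simp add: F'_def)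
  next
    case False then have "pk k pE x = 0" using C.pk0[OF x] by simp
    then show ?thesis by simp
  qed
  define Q where "Q x t = (if pE x = 0 then (if t = t0 then 1 else 0) else C.J x t / pE x)" for x t
  have pQ: "pE x * Q x t = C.J x t" if "x \<in> XS" for x t
    using C.J_p0[OF that] by (simp add: Q_def)
  have tc: "test_channel Sa Rh E Q"
    unfolding test_channel_def prob_simplex_def
  proof (intro ballI CollectI conjI allI impI)
    fix x assume x: "x \<in> XS"
    show "0 \<le> Q x t" for t using C.J0 pE0 by (simp add: Q_def)
    show "Q x t = 0" if "t \<notin> YS" for t using that t0 C.J_out by (auto simp: Q_def)
    show "sum (Q x) YS = 1"
    proof (cases "pE x = 0")
      case True then show ?thesis using t0 finYS by (simp add: Q_def)
    next
      case False then show ?thesis using C.J_row[OF x] by (simp add: Q_def sum_divide_distrib[symmetric])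
    qed
  qed
  have gen: "(\<Sum>x\<in>XS. \<Sum>t\<in>YS. pE x * Q x t * L x t) = (1 / real k) * (\<Sum>j<k. \<Sum>x\<in>seqset k XS. pk k pE x * L (x j) (g (f x) j))" for L
  proof -
    have "(\<Sum>x\<in>XS. \<Sum>t\<in>YS. pE x * Q x t * L x t) = (\<Sum>x\<in>XS. \<Sum>t\<in>YS. C.J x t * L x t)"
      by (intro sum.cong refl) (simp add: pQ)
    also have "\<dots> = (1 / real k) * (\<Sum>j<k. \<Sum>x\<in>seqset k XS. pk k pE x * L (x j) (g (F' x) j))"
      by (rule C.J_group)
    also have "\<dots> = (1 / real k) * (\<Sum>j<k. \<Sum>x\<in>seqset k XS. pk k pE x * L (x j) (g (f x) j))"
      by (intro arg_cong[where f="\<lambda>t. _ * t"] sum.cong refl F'f[where \<Phi>="\<lambda>m. L (x j) (g m j)" for x j]) auto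
    finally show ?thesis .
  qed
  have cost: "Cost Q i = code_dist pS Sa E d k f g i" for i
    unfolding Cost_def code_dist_eq[OF kpos] gen[of "\<lambda>x t. cst i x (t i)"] by simp
  have rm: "RM Q i b = code_recon_marg pS Sa E k f g i b" for i b
  proof -
    have "RM Q i b = (\<Sum>x\<in>XS. \<Sum>t\<in>YS. pE x * Q x t * (if t i = b then 1 else 0))"
      unfolding RM_def by (intro sum.cong refl) auto
    then show ?thesis unfolding code_recon_eq gen by simp
  qed
  have "info_SE_hat pS Sa Rh E Q = mutual_info XS YS C.J"
    unfolding info_SE_hat_def mutual_info_def
    by (intro sum.cong refl) (simp add: pQ sum.cong[OF refl pQ])
  also have "\<dots> \<le> log 2 (real N) / real k" by (rule C.converse_info)
  finally show ?thesis using tc cost rm by blast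
qed

end

lemma tendsto_fun_pointwise:
  fixes u :: "'n \<Rightarrow> 'b \<Rightarrow> real"
  assumes "\<And>b. ((\<lambda>n. u n b) \<longlongrightarrow> a b) F"
  shows "(u \<longlongrightarrow> a) F"
proof -
  have "limitin (product_topology (\<lambda>i. euclidean) UNIV) u a F"
    by (simp add: limitin_componentwise assms)
  then show ?thesis by (simp add: euclidean_product_topology)
qed

lemma bw_real:
  fixes s :: "nat \<Rightarrow> real"
  assumes "\<And>n. \<bar>s n\<bar> \<le> M"
  shows "\<exists>r. strict_mono r \<and> convergent (\<lambda>n. s (r n))"
proof -
  obtain r where r: "strict_mono r" "monoseq (\<lambda>n. s (r n))" using seq_monosub by blast
  have "Bseq (\<lambda>n. s (r n))" using assms by (intro BseqI'[of _ M]) simp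
  then show ?thesis using r Bseq_monoseq_convergent by blast
qed

lemma bw_finite:
  fixes u :: "nat \<Rightarrow> 'c \<Rightarrow> real"
  assumes fin: "finite C" and bd: "\<And>n c. c \<in> C \<Longrightarrow> \<bar>u n c\<bar> \<le> M"
  shows "\<exists>r. strict_mono r \<and> (\<forall>c\<in>C. convergent (\<lambda>n. u (r n) c))"
  using fin bd
proof (induction C rule: finite_induct)
  case empty
  show ?case by (rule exI[of _ id]) (simp add: strict_mono_def)
next
  case (insert c C)
  then obtain r where r: "strict_mono r" "\<forall>c\<in>C. convergent (\<lambda>n. u (r n) c)" by auto
  obtain r2 where r2: "strict_mono r2" "convergent (\<lambda>n. u (r (r2 n)) c)"
    using bw_real[of "\<lambda>n. u (r n) c" M] insert.prems by auto
  have "convergent (\<lambda>n. u (r (r2 n)) c')" if "c' \<in> C" for c'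
    using convergent_subseq_convergent[OF r(2)[rule_format, OF that] r2(1)] by (simp add: o_def)
  then show ?case using r2 strict_mono_compose[OF r(1) r2(1)] by auto
qed

definition hI :: "real \<Rightarrow> real \<Rightarrow> real \<Rightarrow> real" where
  "hI a r c = (if a = 0 then 0 else a * log 2 (a / (r * c)))"

lemma xlnx_bound:
  assumes "0 < x" "x \<le> 1"
  shows "\<bar>x * ln x\<bar> \<le> 2 * sqrt x"
proof -
  have sx: "sqrt x > 0" using assms by simp
  have "ln (1 / sqrt x) \<le> 1 / sqrt x - 1" using sx by (intro ln_le_minus_one) simp
  then have "- ln (sqrt x) \<le> 1 / sqrt x - 1" using sx by (simp add: ln_div)
  moreover have "ln (sqrt x) = ln x / 2" using assms by (simp add: ln_sqrt)
  ultimately have "- ln x \<le> 2 / sqrt x" by simp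
  moreover have "ln x \<le> 0" using assms by simp
  ultimately have "\<bar>x * ln x\<bar> = x * (- ln x)" using assms by (simp add: abs_mult)
  also have "x * (- ln x) \<le> x * (2 / sqrt x)"
    using \<open>- ln x \<le> 2 / sqrt x\<close> assms by (intro mult_left_mono) auto
  finally have "\<bar>x * ln x\<bar> \<le> x * (2 / sqrt x)" .
  also have "x * (2 / sqrt x) = 2 * sqrt x"
    using sx by (metis (no_types, lifting) real_div_sqrt assms(1) less_eq_real_def times_divide_eq_right mult.commute)
  finally show ?thesis .
qed

lemma hI_bound:
  assumes a: "0 < a" and ac: "a \<le> c" and c1: "c \<le> 1" and ar: "a \<le> r"
  shows "\<bar>hI a r c\<bar> \<le> (4 * sqrt a + a * \<bar>ln r\<bar>) / ln 2"
proof -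
  have c: "0 < c" "0 < r" using a ac ar by auto
  have e1: "hI a r c * ln 2 = a * ln (a / (r * c))"
    using a by (simp add: hI_def log_def)
  have e2: "ln (a / (r * c)) = ln a - ln r - ln c"
    using a c by (simp add: ln_div ln_mult)
  have eq: "hI a r c * ln 2 = a * ln a - a * ln r - a * ln c"
    unfolding e1 e2 by (simp add: algebra_simps)
  have la: "\<bar>a * ln a\<bar> \<le> 2 * sqrt a" using xlnx_bound a ac c1 by simp
  have "ln a \<le> ln c" using a ac by simp
  moreover have "ln c \<le> 0" using c c1 by simp
  ultimately have lac: "ln a \<le> ln c" "ln c \<le> 0" "ln a \<le> 0" by auto
  have "\<bar>a * ln c\<bar> = a * (- ln c)" using a lac by (simp add: abs_mult)
  also have "\<dots> \<le> a * (- ln a)" using a lac by (intro mult_left_mono) auto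
  also have "\<dots> = \<bar>a * ln a\<bar>" using a lac by (simp add: abs_mult)
  finally have "\<bar>a * ln c\<bar> \<le> \<bar>a * ln a\<bar>" .
  moreover have "\<bar>a * ln a - a * ln r - a * ln c\<bar> \<le> \<bar>a * ln a - a * ln r\<bar> + \<bar>a * ln c\<bar>"
    by (rule abs_triangle_ineq4)
  moreover have "\<bar>a * ln a - a * ln r\<bar> \<le> \<bar>a * ln a\<bar> + \<bar>a * ln r\<bar>"
    by (rule abs_triangle_ineq4)
  moreover have "\<bar>a * ln r\<bar> = a * \<bar>ln r\<bar>" using a by (simp add: abs_mult)
  ultimately have "\<bar>hI a r c * ln 2\<bar> \<le> 4 * sqrt a + a * \<bar>ln r\<bar>"
    unfolding eq using la by linarith
  then show ?thesis by (simp add: abs_mult pos_le_divide_eq)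
qed

lemma hI_cont:
  fixes a c :: "nat \<Rightarrow> real"
  assumes la: "a \<longlonglongrightarrow> a0" and lc: "c \<longlonglongrightarrow> c0"
    and a0: "\<And>n. 0 \<le> a n" and ac: "\<And>n. a n \<le> c n" and c1: "\<And>n. c n \<le> 1" and ar: "\<And>n. a n \<le> r"
  shows "(\<lambda>n. hI (a n) r (c n)) \<longlonglongrightarrow> hI a0 r c0"
proof -
  have A0: "0 \<le> a0" using la a0 by (intro LIMSEQ_le_const) auto
  have AC: "a0 \<le> c0" using la lc ac by (intro LIMSEQ_le) auto
  have AR: "a0 \<le> r" using la ar by (intro LIMSEQ_le_const2) auto
  show ?thesis
  proof (cases "a0 = 0")
    case False
    then have ap: "a0 > 0" using A0 by simp
    have ev: "eventually (\<lambda>n. a n > 0) sequentially" using la ap by (rule order_tendstoD)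
    have "(\<lambda>n. a n * log 2 (a n / (r * c n))) \<longlonglongrightarrow> a0 * log 2 (a0 / (r * c0))"
      using ap AC AR by (intro tendsto_intros la lc) auto
    moreover have "eventually (\<lambda>n. a n * log 2 (a n / (r * c n)) = hI (a n) r (c n)) sequentially"
      using ev by eventually_elim (simp add: hI_def)
    ultimately show ?thesis using False by (simp add: hI_def tendsto_cong)
  next
    case True
    show ?thesis
    proof (cases "r = 0")
      case True
      then have "\<And>n. a n = 0" using a0 ar by (meson antisym)
      then show ?thesis using \<open>a0 = 0\<close> by (simp add: hI_def)
    next
      case False
      have "(\<lambda>n. hI (a n) r (c n)) \<longlonglongrightarrow> 0"
      proof (rule Lim_null_comparison)
        show "eventually (\<lambda>n. norm (hI (a n) r (c n)) \<le> (4 * sqrt (a n) + a n * \<bar>ln r\<bar>) / ln 2) sequentially"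
        proof (rule always_eventually, rule allI)
          fix n
          show "norm (hI (a n) r (c n)) \<le> (4 * sqrt (a n) + a n * \<bar>ln r\<bar>) / ln 2"
          proof (cases "a n = 0")
            case True then show ?thesis by (simp add: hI_def)
          next
            case False
            then show ?thesis using hI_bound[of "a n" "c n" r] a0[of n] ac[of n] c1[of n] ar[of n] by simp
          qed
        qed
        have "(\<lambda>n. (4 * sqrt (a n) + a n * \<bar>ln r\<bar>) / ln 2) \<longlonglongrightarrow> (4 * sqrt 0 + 0 * \<bar>ln r\<bar>) / ln 2"
          using True la by (intro tendsto_intros) auto
        then show "(\<lambda>n. (4 * sqrt (a n) + a n * \<bar>ln r\<bar>) / ln 2) \<longlonglongrightarrow> 0" by simp
      qed
      then show ?thesis using True by (simp add: hI_def)
    qed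
  qed
qed

lemma sum_prod_pairs:
  fixes f :: "nat \<Rightarrow> 'x \<Rightarrow> 'y \<Rightarrow> real"
  assumes "finite X" "finite Y"
  shows "(\<Sum>x\<in>seqset k X. \<Sum>y\<in>seqset k Y. \<Prod>j<k. f j (x j) (y j)) = (\<Prod>j<k. \<Sum>a\<in>X. \<Sum>b\<in>Y. f j a b)"
proof -
  have "(\<Sum>x\<in>seqset k X. \<Sum>y\<in>seqset k Y. \<Prod>j<k. f j (x j) (y j)) = (\<Sum>x\<in>seqset k X. \<Prod>j<k. \<Sum>b\<in>Y. f j (x j) b)"
    by (intro sum.cong refl sum_prod_seqset[OF assms(2)])
  also have "\<dots> = (\<Prod>j<k. \<Sum>a\<in>X. \<Sum>b\<in>Y. f j a b)"
    by (rule sum_prod_seqset[OF assms(1), where f="\<lambda>j a. \<Sum>b\<in>Y. f j a b"])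
  finally show ?thesis .
qed

locale ach_setup =
  fixes X :: "'x set" and Y :: "'y set" and p :: "'x \<Rightarrow> real" and Q :: "'x \<Rightarrow> 'y \<Rightarrow> real"
  assumes finX: "finite X" and finY: "finite Y" and p0: "\<And>a. 0 \<le> p a" and p1: "sum p X = 1"
    and Q0: "\<And>a b. a \<in> X \<Longrightarrow> 0 \<le> Q a b" and Q1: "\<And>a. a \<in> X \<Longrightarrow> sum (Q a) Y = 1"
begin

definition w where "w a b = p a * Q a b"
definition q where "q b = (\<Sum>a\<in>X. w a b)"
definition mean where "mean h = (\<Sum>a\<in>X. \<Sum>b\<in>Y. w a b * h a b)"
definition var where "var h = (\<Sum>a\<in>X. \<Sum>b\<in>Y. w a b * (h a b - mean h)^2)"
definition PQ where "PQ k x y = (\<Prod>j<k. w (x j) (y j))"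

lemma w0: "a \<in> X \<Longrightarrow> 0 \<le> w a b" unfolding w_def using p0 Q0 by simp

lemma sum_w: "(\<Sum>a\<in>X. \<Sum>b\<in>Y. w a b) = 1"
  unfolding w_def using p1 Q1 by (simp add: sum_distrib_left[symmetric])

lemma PQ0: "x \<in> seqset k X \<Longrightarrow> 0 \<le> PQ k x y"
  unfolding PQ_def seqset_def by (intro prod_nonneg) (auto simp: w0 PiE_iff)

lemma moment2:
  fixes g :: "'x \<Rightarrow> 'y \<Rightarrow> real"
  assumes g0: "mean g = 0"
  shows "(\<Sum>x\<in>seqset k X. \<Sum>y\<in>seqset k Y. PQ k x y * (\<Sum>j<k. g (x j) (y j))^2) = real k * mean (\<lambda>a b. (g a b)^2)"
proof -
  have cross: "(\<Sum>x\<in>seqset k X. \<Sum>y\<in>seqset k Y. PQ k x y * (g (x j) (y j) * g (x l) (y l)))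
      = (if j = l then mean (\<lambda>a b. (g a b)^2) else 0)" if j: "j < k" and l: "l < k" for j l
  proof -
    define f where "f m a b = w a b * (if m = j then g a b else 1) * (if m = l then g a b else 1)" for m a b
    have "(\<Sum>x\<in>seqset k X. \<Sum>y\<in>seqset k Y. PQ k x y * (g (x j) (y j) * g (x l) (y l)))
        = (\<Sum>x\<in>seqset k X. \<Sum>y\<in>seqset k Y. \<Prod>m<k. f m (x m) (y m))"
    proof (intro sum.cong refl)
      fix x y
      have "(\<Prod>m<k. f m (x m) (y m)) = (\<Prod>m<k. w (x m) (y m)) * (\<Prod>m<k. (if m = j then g (x m) (y m) else 1)) * (\<Prod>m<k. (if m = l then g (x m) (y m) else 1))"
        unfolding f_def by (simp add: prod.distrib)
      also have "\<dots> = PQ k x y * (g (x j) (y j) * g (x l) (y l))"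
        using j l by (simp add: PQ_def prod.If_cases Int_absorb1)
      finally show "PQ k x y * (g (x j) (y j) * g (x l) (y l)) = (\<Prod>m<k. f m (x m) (y m))" by simp
    qed
    also have "\<dots> = (\<Prod>m<k. \<Sum>a\<in>X. \<Sum>b\<in>Y. f m a b)" by (rule sum_prod_pairs[OF finX finY])
    also have "\<dots> = (if j = l then mean (\<lambda>a b. (g a b)^2) else 0)"
    proof (cases "j = l")
      case True
      have "(\<Prod>m<k. \<Sum>a\<in>X. \<Sum>b\<in>Y. f m a b) = (\<Sum>a\<in>X. \<Sum>b\<in>Y. f j a b) * (\<Prod>m\<in>{..<k}-{j}. \<Sum>a\<in>X. \<Sum>b\<in>Y. f m a b)"
        using j by (subst prod.remove[of _ j]) auto
      also have "(\<Prod>m\<in>{..<k}-{j}. \<Sum>a\<in>X. \<Sum>b\<in>Y. f m a b) = 1"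
        using True sum_w by (intro prod.neutral) (auto simp: f_def)
      also have "(\<Sum>a\<in>X. \<Sum>b\<in>Y. f j a b) = mean (\<lambda>a b. (g a b)^2)"
        using True by (simp add: f_def mean_def power2_eq_square mult.assoc)
      finally show ?thesis using True by simp
    next
      case False
      have "(\<Prod>m<k. \<Sum>a\<in>X. \<Sum>b\<in>Y. f m a b) = (\<Sum>a\<in>X. \<Sum>b\<in>Y. f j a b) * (\<Prod>m\<in>{..<k}-{j}. \<Sum>a\<in>X. \<Sum>b\<in>Y. f m a b)"
        using j by (subst prod.remove[of _ j]) auto
      also have "(\<Sum>a\<in>X. \<Sum>b\<in>Y. f j a b) = mean g"
        using False by (simp add: f_def mean_def)
      finally show ?thesis using False g0 by simp
    qed
    finally show ?thesis .
  qed
  have "(\<Sum>x\<in>seqset k X. \<Sum>y\<in>seqset k Y. PQ k x y * (\<Sum>j<k. g (x j) (y j))^2)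
      = (\<Sum>x\<in>seqset k X. \<Sum>y\<in>seqset k Y. \<Sum>j<k. \<Sum>l<k. PQ k x y * (g (x j) (y j) * g (x l) (y l)))"
  proof (intro sum.cong refl)
    fix x y
    have "(\<Sum>j<k. g (x j) (y j))^2 = (\<Sum>j<k. \<Sum>l<k. g (x j) (y j) * g (x l) (y l))"
      by (simp add: power2_eq_square sum_product)
    then show "PQ k x y * (\<Sum>j<k. g (x j) (y j))^2 = (\<Sum>j<k. \<Sum>l<k. PQ k x y * (g (x j) (y j) * g (x l) (y l)))"
      by (simp add: sum_distrib_left)
  qed
  also have "\<dots> = (\<Sum>j<k. \<Sum>l<k. \<Sum>x\<in>seqset k X. \<Sum>y\<in>seqset k Y. PQ k x y * (g (x j) (y j) * g (x l) (y l)))"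
  proof -
    have "(\<Sum>x\<in>seqset k X. \<Sum>y\<in>seqset k Y. \<Sum>j<k. \<Sum>l<k. PQ k x y * (g (x j) (y j) * g (x l) (y l)))
        = (\<Sum>x\<in>seqset k X. \<Sum>j<k. \<Sum>y\<in>seqset k Y. \<Sum>l<k. PQ k x y * (g (x j) (y j) * g (x l) (y l)))"
      by (intro sum.cong refl sum.swap)
    also have "\<dots> = (\<Sum>j<k. \<Sum>x\<in>seqset k X. \<Sum>y\<in>seqset k Y. \<Sum>l<k. PQ k x y * (g (x j) (y j) * g (x l) (y l)))"
      by (rule sum.swap)
    also have "\<dots> = (\<Sum>j<k. \<Sum>x\<in>seqset k X. \<Sum>l<k. \<Sum>y\<in>seqset k Y. PQ k x y * (g (x j) (y j) * g (x l) (y l)))"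
      by (intro sum.cong refl sum.swap)
    also have "\<dots> = (\<Sum>j<k. \<Sum>l<k. \<Sum>x\<in>seqset k X. \<Sum>y\<in>seqset k Y. PQ k x y * (g (x j) (y j) * g (x l) (y l)))"
      by (intro sum.cong refl sum.swap)
    finally show ?thesis .
  qed
  also have "\<dots> = (\<Sum>j<k. \<Sum>l<k. if j = l then mean (\<lambda>a b. (g a b)^2) else 0)"
    by (intro sum.cong refl cross) auto
  also have "\<dots> = real k * mean (\<lambda>a b. (g a b)^2)" by simp
  finally show ?thesis .
qed

lemma mean_shift: "mean (\<lambda>a b. h a b - c) = mean h - c"
  unfolding mean_def using sum_w
  by (simp add: right_diff_distrib sum_subtractf sum_distrib_right[symmetric])

lemma lln:
  assumes k: "k > 0" and \<delta>: "\<delta> > 0"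
  shows "(\<Sum>x\<in>seqset k X. \<Sum>y\<in>seqset k Y. PQ k x y * (if (\<Sum>j<k. h (x j) (y j)) > real k * (mean h + \<delta>) then 1 else 0))
     \<le> var h / (real k * \<delta>^2)"
proof -
  define g where "g a b = h a b - mean h" for a b
  have g0: "mean g = 0" unfolding g_def using mean_shift[of h "mean h"] by simp
  have var_eq: "var h = mean (\<lambda>a b. (g a b)^2)" unfolding var_def mean_def g_def by simp
  have pt: "(if (\<Sum>j<k. h (x j) (y j)) > real k * (mean h + \<delta>) then 1 else 0) \<le> (\<Sum>j<k. g (x j) (y j))^2 / (real k * \<delta>)^2"
    for x y
  proof -
    have S: "(\<Sum>j<k. g (x j) (y j)) = (\<Sum>j<k. h (x j) (y j)) - real k * mean h"
      unfolding g_def by (simp add: sum_subtractf)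
    show ?thesis
    proof (cases "(\<Sum>j<k. h (x j) (y j)) > real k * (mean h + \<delta>)")
      case True
      then have "(\<Sum>j<k. g (x j) (y j)) > real k * \<delta>" unfolding S by (simp add: algebra_simps)
      moreover have "real k * \<delta> > 0" using k \<delta> by simp
      ultimately have "(real k * \<delta>)^2 \<le> (\<Sum>j<k. g (x j) (y j))^2"
        by (intro power_mono) auto
      then show ?thesis using True k \<delta> by simp
    qed simp
  qed
  have "(\<Sum>x\<in>seqset k X. \<Sum>y\<in>seqset k Y. PQ k x y * (if (\<Sum>j<k. h (x j) (y j)) > real k * (mean h + \<delta>) then 1 else 0))
     \<le> (\<Sum>x\<in>seqset k X. \<Sum>y\<in>seqset k Y. PQ k x y * ((\<Sum>j<k. g (x j) (y j))^2 / (real k * \<delta>)^2))"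
    by (intro sum_mono mult_left_mono pt PQ0) auto
  also have "\<dots> = (\<Sum>x\<in>seqset k X. \<Sum>y\<in>seqset k Y. PQ k x y * (\<Sum>j<k. g (x j) (y j))^2) / (real k * \<delta>)^2"
    by (simp add: sum_divide_distrib)
  also have "\<dots> = real k * var h / (real k * \<delta>)^2" unfolding moment2[OF g0] var_eq ..
  also have "\<dots> = var h / (real k * \<delta>^2)" using k by (simp add: power2_eq_square)
  finally show ?thesis .
qed

end

lemma cover:
  fixes pp :: "'x \<Rightarrow> real" and qq :: "'y \<Rightarrow> real"
  assumes finU: "finite U" and finY: "finite Yc" and qq0: "\<And>y. y \<in> Yc \<Longrightarrow> 0 \<le> qq y" and qq1: "sum qq Yc = 1"
    and pp0: "\<And>x. 0 \<le> pp x" and g0: "0 \<le> \<gamma>"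
    and cov: "\<And>x. x \<in> U \<Longrightarrow> \<gamma> \<le> (\<Sum>y\<in>Yc. if R x y then qq y else 0)"
  shows "\<exists>c. (\<forall>m<n. c m \<in> Yc) \<and> (\<Sum>x\<in>U. if \<forall>m<n. \<not> R x (c m) then pp x else 0) \<le> (1 - \<gamma>)^n * sum pp U"
proof (induction n)
  case 0
  show ?case by (rule exI[of _ "\<lambda>_. undefined"]) simp
next
  case (Suc n)
  then obtain c where c: "\<forall>m<n. c m \<in> Yc" and
    M: "(\<Sum>x\<in>U. if \<forall>m<n. \<not> R x (c m) then pp x else 0) \<le> (1 - \<gamma>)^n * sum pp U" by blast
  define unc where "unc x = (\<forall>m<n. \<not> R x (c m))" for x
  define val where "val y = (\<Sum>x\<in>U. if unc x \<and> R x y then pp x else 0)" for y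
  define Mv where "Mv = (\<Sum>x\<in>U. if unc x then pp x else 0)"
  have Yne: "Yc \<noteq> {}" using qq1 by auto
  obtain y where y: "y \<in> Yc" "\<And>y'. y' \<in> Yc \<Longrightarrow> val y' \<le> val y"
  proof -
    have "Max (val ` Yc) \<in> val ` Yc" using finY Yne by (intro Max_in) auto
    then obtain y where "y \<in> Yc" "val y = Max (val ` Yc)" by auto
    moreover have "val y' \<le> Max (val ` Yc)" if "y' \<in> Yc" for y' using finY that by (intro Max_ge) auto
    ultimately show ?thesis using that by metis
  qed
  have "\<gamma> * Mv = (\<Sum>x\<in>U. \<gamma> * (if unc x then pp x else 0))" by (simp add: Mv_def sum_distrib_left)
  also have "\<dots> \<le> (\<Sum>x\<in>U. if unc x then pp x * (\<Sum>y\<in>Yc. if R x y then qq y else 0) else 0)"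
  proof (rule sum_mono)
    fix x assume x: "x \<in> U"
    show "\<gamma> * (if unc x then pp x else 0) \<le> (if unc x then pp x * (\<Sum>y\<in>Yc. if R x y then qq y else 0) else 0)"
      using mult_right_mono[OF cov[OF x] pp0[of x]] by (simp add: mult.commute)
  qed
  also have "\<dots> = (\<Sum>y\<in>Yc. qq y * val y)"
    unfolding val_def sum_distrib_left
    by (subst sum.swap) (intro sum.cong refl, auto simp: sum_distrib_left intro!: sum.cong)
  also have "\<dots> \<le> (\<Sum>y'\<in>Yc. qq y' * val y)" by (intro sum_mono mult_left_mono y(2) qq0)
  also have "\<dots> = val y" using qq1 by (simp add: sum_distrib_right[symmetric])
  finally have vy: "\<gamma> * Mv \<le> val y" .
  define c' where "c' = c(n := y)"
  have c'1: "\<forall>m<Suc n. c' m \<in> Yc" using c y(1) by (auto simp: c'_def less_Suc_eq)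
  have unc': "(\<forall>m<Suc n. \<not> R x (c' m)) \<longleftrightarrow> unc x \<and> \<not> R x y" for x
    by (auto simp: c'_def unc_def less_Suc_eq)
  have "(\<Sum>x\<in>U. if \<forall>m<Suc n. \<not> R x (c' m) then pp x else 0) = Mv - val y"
    unfolding unc' Mv_def val_def by (simp add: sum_subtractf[symmetric]) (intro sum.cong refl, auto)
  also have "\<dots> \<le> (1 - \<gamma>) * Mv" using vy by (simp add: algebra_simps)
  also have "\<dots> \<le> (1 - \<gamma>)^(Suc n) * sum pp U"
  proof (cases "\<gamma> \<le> 1")
    case True
    have "(1 - \<gamma>) * Mv \<le> (1 - \<gamma>) * ((1 - \<gamma>)^n * sum pp U)"
      using M True unfolding Mv_def unc_def by (intro mult_left_mono) auto
    then show ?thesis by simp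
  next
    case False
    have "U = {}"
    proof (rule ccontr)
      assume "U \<noteq> {}"
      then obtain x where x: "x \<in> U" by auto
      have "(\<Sum>y\<in>Yc. if R x y then qq y else 0) \<le> sum qq Yc" by (intro sum_mono) (auto simp: qq0)
      then show False using cov[OF x] qq1 False by simp
    qed
    then show ?thesis by (simp add: Mv_def)
  qed
  finally show ?case using c'1 by blast
qed

context ach_setup begin

definition \<iota> where "\<iota> a b = (if w a b = 0 then 0 else log 2 (w a b / (p a * q b)))"
definition Iq where "Iq = mean \<iota>"
definition Good where
  "Good k \<delta> H x y \<longleftrightarrow> (\<forall>j<k. 0 < w (x j) (y j)) \<and> (\<forall>h\<in>H. (\<Sum>j<k. h (x j) (y j)) \<le> real k * (mean h + \<delta>))"
definition Qk where "Qk k x y = (\<Prod>j<k. Q (x j) (y j))"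
definition Pbad where
  "Pbad k \<delta> H = (\<Sum>x\<in>seqset k X. \<Sum>y\<in>seqset k Y. if Good k \<delta> H x y then 0 else PQ k x y)"

lemma q0: "0 \<le> q b" unfolding q_def by (intro sum_nonneg w0)

lemma q1: "sum q Y = 1" unfolding q_def using sum_w by (subst sum.swap) simp

lemma w_le_q: "a \<in> X \<Longrightarrow> w a b \<le> q b" unfolding q_def using finX w0 by (intro member_le_sum) auto

lemma Pbad_le:
  assumes finH: "finite H" and k: "k > 0" and \<delta>: "\<delta> > 0"
  shows "Pbad k \<delta> H \<le> (\<Sum>h\<in>H. var h / (real k * \<delta>^2))"
proof -
  have pt: "(if Good k \<delta> H x y then 0 else PQ k x y)
      \<le> (\<Sum>h\<in>H. PQ k x y * (if (\<Sum>j<k. h (x j) (y j)) > real k * (mean h + \<delta>) then 1 else 0))"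
    if x: "x \<in> seqset k X" for x y
  proof (cases "Good k \<delta> H x y")
    case True then show ?thesis using PQ0[OF x] by (auto intro!: sum_nonneg)
  next
    case False
    show ?thesis
    proof (cases "\<forall>j<k. 0 < w (x j) (y j)")
      case True
      then obtain h where h: "h \<in> H" "(\<Sum>j<k. h (x j) (y j)) > real k * (mean h + \<delta>)"
        using False unfolding Good_def by (auto simp: not_le)
      have "PQ k x y = PQ k x y * (if (\<Sum>j<k. h (x j) (y j)) > real k * (mean h + \<delta>) then 1 else 0)"
        using h by simp
      also have "\<dots> \<le> (\<Sum>h\<in>H. PQ k x y * (if (\<Sum>j<k. h (x j) (y j)) > real k * (mean h + \<delta>) then 1 else 0))"
        using finH h(1) PQ0[OF x] by (intro member_le_sum) auto
      finally show ?thesis using False by simp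
    next
      case False
      then obtain j where "j < k" "w (x j) (y j) \<le> 0" by (auto simp: not_less)
      moreover have "0 \<le> w (x j) (y j)" using x \<open>j < k\<close> by (intro w0) (auto simp: seqset_def PiE_iff)
      ultimately have "PQ k x y = 0" unfolding PQ_def by (intro prod_zero) auto
      then show ?thesis by (auto intro!: sum_nonneg)
    qed
  qed
  have "Pbad k \<delta> H \<le> (\<Sum>x\<in>seqset k X. \<Sum>y\<in>seqset k Y. \<Sum>h\<in>H. PQ k x y * (if (\<Sum>j<k. h (x j) (y j)) > real k * (mean h + \<delta>) then 1 else 0))"
    unfolding Pbad_def by (intro sum_mono pt)
  also have "\<dots> = (\<Sum>h\<in>H. \<Sum>x\<in>seqset k X. \<Sum>y\<in>seqset k Y. PQ k x y * (if (\<Sum>j<k. h (x j) (y j)) > real k * (mean h + \<delta>) then 1 else 0))"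
    by (subst sum.swap, rule sum.cong[OF refl], rule sum.swap)
  also have "\<dots> \<le> (\<Sum>h\<in>H. var h / (real k * \<delta>^2))" by (intro sum_mono lln k \<delta>)
  finally show ?thesis .
qed

end

context rdp begin

lemma tc_props:
  assumes tc: "test_channel Sa Rh E Q" and x: "x \<in> XS"
  shows "0 \<le> Q x t" "Q x t \<le> 1" "sum (Q x) YS = 1" "t \<notin> YS \<Longrightarrow> Q x t = 0"
proof -
  have s: "Q x \<in> prob_simplex YS" using tc x by (simp add: test_channel_def)
  then show q0: "0 \<le> Q x t" and "sum (Q x) YS = 1" "t \<notin> YS \<Longrightarrow> Q x t = 0"
    by (auto simp: prob_simplex_def)
  show "Q x t \<le> 1"
  proof (cases "t \<in> YS")
    case True
    then have "Q x t \<le> sum (Q x) YS" using s finYS by (intro member_le_sum) (auto simp: prob_simplex_def)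
    then show ?thesis using s by (simp add: prob_simplex_def)
  next
    case False then show ?thesis using s by (simp add: prob_simplex_def)
  qed
qed

definition colQ :: "(('i \<Rightarrow> 'a) \<Rightarrow> ('i \<Rightarrow> 'b) \<Rightarrow> real) \<Rightarrow> ('i \<Rightarrow> 'b) \<Rightarrow> real" where
  "colQ Q t = (\<Sum>x'\<in>XS. pE x' * Q x' t)"

lemma info_hI:
  assumes tc: "test_channel Sa Rh E Q"
  shows "info_SE_hat pS Sa Rh E Q = (\<Sum>x\<in>XS. \<Sum>t\<in>YS. hI (pE x * Q x t) (pE x) (colQ Q t))"
proof -
  have r: "(\<Sum>t'\<in>YS. pE x * Q x t') = pE x" if "x \<in> XS" for x
    using tc_props(3)[OF tc that] by (simp add: sum_distrib_left[symmetric])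
  show ?thesis unfolding info_SE_hat_def mutual_info_def hI_def colQ_def
    by (intro sum.cong refl) (simp add: r)
qed

lemma colQ_props:
  assumes tc: "test_channel Sa Rh E Q" and x: "x \<in> XS" and t: "t \<in> YS"
  shows "pE x * Q x t \<le> colQ Q t" "colQ Q t \<le> 1" "pE x * Q x t \<le> pE x"
proof -
  have nn: "0 \<le> pE x' * Q x' t'" if "x' \<in> XS" for x' t' using pE0 tc_props(1)[OF tc that] by simp
  show "pE x * Q x t \<le> colQ Q t" unfolding colQ_def using finXS x nn by (intro member_le_sum) auto
  have "colQ Q t \<le> (\<Sum>t'\<in>YS. colQ Q t')" using finYS t nn unfolding colQ_def
    by (intro member_le_sum) (auto intro!: sum_nonneg)
  also have "\<dots> = (\<Sum>x'\<in>XS. pE x' * (\<Sum>t'\<in>YS. Q x' t'))"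
    unfolding colQ_def by (subst sum.swap) (simp add: sum_distrib_left)
  also have "\<dots> = 1" using tc_props(3)[OF tc] pE1 by simp
  finally show "colQ Q t \<le> 1" .
  show "pE x * Q x t \<le> pE x" using tc_props(2)[OF tc x] pE0[of x] by (simp add: mult_left_le)
qed

lemma RM_simplex:
  assumes tc: "test_channel Sa Rh E Q"
  shows "RM Q i \<in> prob_simplex (Rh i)"
  unfolding prob_simplex_def
proof (intro CollectI conjI allI impI)
  fix b
  show "0 \<le> RM Q i b" unfolding RM_def using tc_props(1)[OF tc] pE0 by (auto intro!: sum_nonneg)
  show "RM Q i b = 0" if "b \<notin> Rh i"
    unfolding RM_def using that by (intro sum.neutral ballI) (auto simp: PiE_iff)
next
  have "sum (RM Q i) (Rh i) = (\<Sum>x\<in>XS. \<Sum>t\<in>YS. \<Sum>b\<in>Rh i. if t i = b then pE x * Q x t else 0)"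
    unfolding RM_def by (subst sum.swap, rule sum.cong[OF refl], rule sum.swap)
  also have "\<dots> = (\<Sum>x\<in>XS. \<Sum>t\<in>YS. pE x * Q x t)"
    using fin_R by (intro sum.cong refl) (auto simp: PiE_iff sum.delta)
  also have "\<dots> = 1" using tc_props(3)[OF tc] pE1 by (simp add: sum_distrib_left[symmetric])
  finally show "sum (RM Q i) (Rh i) = 1" .
qed

lemma marg_i_simplex: "marg_i pS Sa i \<in> prob_simplex (Sa i)"
  unfolding prob_simplex_def
proof (intro CollectI conjI allI impI)
  fix a
  show "0 \<le> marg_i pS Sa i a" unfolding marg_i_def by (auto intro!: sum_nonneg simp: pS0)
  show "marg_i pS Sa i a = 0" if "a \<notin> Sa i"
    unfolding marg_i_def using that by (intro sum.neutral ballI) (auto simp: PiE_iff)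
next
  have "sum (marg_i pS Sa i) (Sa i) = (\<Sum>s\<in>US. \<Sum>a\<in>Sa i. if s i = a then pS s else 0)"
    unfolding marg_i_def by (rule sum.swap)
  also have "\<dots> = (\<Sum>s\<in>US. pS s)" using fin_S by (intro sum.cong refl) (auto simp: PiE_iff sum.delta)
  finally show "sum (marg_i pS Sa i) (Sa i) = 1" using pS1 by simp
qed

end

locale rdp_phi = rdp pS Sa Rh E d
  for pS :: "('i::finite \<Rightarrow> 'a) \<Rightarrow> real" and Sa Rh E d +
  fixes \<phi> :: "'i \<Rightarrow> ('a \<Rightarrow> real) \<Rightarrow> ('b \<Rightarrow> real) \<Rightarrow> real"
  assumes phi_cc: "\<And>i p. p \<in> prob_simplex (Sa i) \<Longrightarrow> convex_cont_on_simplex (Rh i) (\<phi> i p)"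
begin

lemma phi_cont: "continuous_on (prob_simplex (Rh i)) (\<phi> i (marg_i pS Sa i))"
  using phi_cc[OF marg_i_simplex] by (simp add: convex_cont_on_simplex_def)

definition feas where
  "feas D P Q \<longleftrightarrow> test_channel Sa Rh E Q
          \<and> (\<forall>i\<in>E. exp_dist pS Sa Rh E Q d i \<le> D i)
          \<and> (\<forall>i\<in>- E. exp_hat_dist pS Sa Rh E Q d i \<le> D i)
          \<and> (\<forall>i. \<phi> i (marg_i pS Sa i) (recon_marg pS Sa Rh E Q i) \<le> P i)"

lemma feas_Cost: "test_channel Sa Rh E Q \<Longrightarrow> (\<forall>i. Cost Q i \<le> D i) \<Longrightarrow> (\<forall>i. \<phi> i (marg_i pS Sa i) (RM Q i) \<le> P i) \<Longrightarrow> feas D P Q"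
proof -
  have rm: "\<And>i. recon_marg pS Sa Rh E Q i = RM Q i" using recon_marg_RM by (simp add: fun_eq_iff)
  assume "test_channel Sa Rh E Q" "\<forall>i. Cost Q i \<le> D i" "\<forall>i. \<phi> i (marg_i pS Sa i) (RM Q i) \<le> P i"
  then show ?thesis by (auto simp: feas_def exp_dist_Cost exp_hat_dist_Cost rm)
qed

theorem converse_limit:
  assumes ach: "achievable pS Sa Rh E d \<phi> R D P"
  shows "\<exists>Q. feas D P Q \<and> info_SE_hat pS Sa Rh E Q \<le> R"
proof -
  define e where "e n = inverse (real (Suc n))" for n :: nat
  have epos: "e n > 0" for n by (simp add: e_def)
  have "\<exists>Q. test_channel Sa Rh E Q \<and> (\<forall>i. Cost Q i \<le> D i + e n)
          \<and> (\<forall>i. \<phi> i (marg_i pS Sa i) (RM Q i) \<le> P i + e n) \<and> info_SE_hat pS Sa Rh E Q \<le> R + e n" for n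
  proof -
    obtain K where K: "\<forall>k\<ge>K. \<exists>N f g. code_valid Sa Rh E k N f g
      \<and> log 2 (real N) / real k \<le> R + e n
      \<and> (\<forall>i. code_dist pS Sa E d k f g i \<le> D i + e n)
      \<and> (\<forall>i. \<phi> i (marg_i pS Sa i) (code_recon_marg pS Sa E k f g i) \<le> P i + e n)"
      using ach epos[of n] unfolding achievable_def by blast
    define k where "k = max K 1"
    obtain N f g where c: "code_valid Sa Rh E k N f g" "log 2 (real N) / real k \<le> R + e n"
      "\<forall>i. code_dist pS Sa E d k f g i \<le> D i + e n"
      "\<forall>i. \<phi> i (marg_i pS Sa i) (code_recon_marg pS Sa E k f g i) \<le> P i + e n"
      using K[rule_format, of k] by (auto simp: k_def)
    have kpos: "k > 0" by (simp add: k_def)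
    obtain Q where Q: "test_channel Sa Rh E Q" "\<forall>i. Cost Q i = code_dist pS Sa E d k f g i"
      "\<forall>i b. RM Q i b = code_recon_marg pS Sa E k f g i b"
      "info_SE_hat pS Sa Rh E Q \<le> log 2 (real N) / real k"
      using converse_one[OF c(1) kpos] by blast
    have "RM Q i = code_recon_marg pS Sa E k f g i" for i using Q(3) by (simp add: fun_eq_iff)
    then show ?thesis using Q c by (intro exI[of _ Q]) auto
  qed
  then obtain Qs where Qs: "\<And>n. test_channel Sa Rh E (Qs n)" "\<And>n i. Cost (Qs n) i \<le> D i + e n"
    "\<And>n i. \<phi> i (marg_i pS Sa i) (RM (Qs n) i) \<le> P i + e n" "\<And>n. info_SE_hat pS Sa Rh E (Qs n) \<le> R + e n"
    by metis
  obtain r where r: "strict_mono r" "\<forall>c\<in>XS \<times> YS. convergent (\<lambda>n. (\<lambda>(x, t). Qs (r n) x t) c)"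
  proof -
    have "\<exists>r. strict_mono r \<and> (\<forall>c\<in>XS \<times> YS. convergent (\<lambda>n. (\<lambda>(x, t). Qs (r n) x t) c))"
    proof (rule bw_finite[of "XS \<times> YS" "\<lambda>n (x, t). Qs n x t" 1])
      show "finite (XS \<times> YS)" using finXS finYS by simp
      fix n c assume "c \<in> XS \<times> YS"
      then obtain x t where c: "c = (x, t)" "x \<in> XS" by auto
      have "0 \<le> Qs n x t" "Qs n x t \<le> 1" using tc_props(1,2)[OF Qs(1) c(2)] by auto
      then show "\<bar>(case c of (x, t) \<Rightarrow> Qs n x t)\<bar> \<le> 1" using c by simp
    qed
    then show ?thesis using that by blast
  qed
  define Q where "Q x t = (if x \<in> XS \<and> t \<in> YS then lim (\<lambda>n. Qs (r n) x t) else 0)" for x t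
  have conv: "(\<lambda>n. Qs (r n) x t) \<longlonglongrightarrow> Q x t" if x: "x \<in> XS" for x t
  proof (cases "t \<in> YS")
    case True
    then have "convergent (\<lambda>n. Qs (r n) x t)" using r(2) x by auto
    then show ?thesis using x True by (simp add: Q_def convergent_LIMSEQ_iff)
  next
    case False
    then show ?thesis using tc_props(4)[OF Qs(1) x] by (simp add: Q_def)
  qed
  have er: "(\<lambda>n. e (r n)) \<longlonglongrightarrow> 0"
    using LIMSEQ_subseq_LIMSEQ[OF LIMSEQ_inverse_real_of_nat r(1)] by (simp add: e_def o_def)
  have tc: "test_channel Sa Rh E Q"
    unfolding test_channel_def prob_simplex_def
  proof (intro ballI CollectI conjI allI impI)
    fix x assume x: "x \<in> XS"
    show "0 \<le> Q x t" for t using conv[OF x, of t] tc_props(1)[OF Qs(1) x]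
      by (intro LIMSEQ_le_const) auto
    show "Q x t = 0" if "t \<notin> YS" for t using that by (simp add: Q_def)
    have "(\<lambda>n. \<Sum>t\<in>YS. Qs (r n) x t) \<longlonglongrightarrow> (\<Sum>t\<in>YS. Q x t)"
      by (intro tendsto_sum conv[OF x])
    moreover have "(\<lambda>n. \<Sum>t\<in>YS. Qs (r n) x t) = (\<lambda>n. 1)" using tc_props(3)[OF Qs(1) x] by simp
    ultimately have "(\<lambda>n. 1::real) \<longlonglongrightarrow> sum (Q x) YS" by simp
    then show "sum (Q x) YS = 1" by (simp add: LIMSEQ_const_iff)
  qed
  have cost: "Cost Q i \<le> D i" for i
  proof -
    have "(\<lambda>n. Cost (Qs (r n)) i) \<longlonglongrightarrow> Cost Q i"
      unfolding Cost_def by (intro tendsto_sum tendsto_mult tendsto_const conv) auto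
    moreover have "(\<lambda>n. D i + e (r n)) \<longlonglongrightarrow> D i + 0" by (intro tendsto_add tendsto_const er)
    ultimately show ?thesis using Qs(2) by (intro LIMSEQ_le[where X="\<lambda>n. Cost (Qs (r n)) i"]) auto
  qed
  have per: "\<phi> i (marg_i pS Sa i) (RM Q i) \<le> P i" for i
  proof -
    have "(\<lambda>n. RM (Qs (r n)) i) \<longlonglongrightarrow> RM Q i"
    proof (rule tendsto_fun_pointwise)
      fix b show "(\<lambda>n. RM (Qs (r n)) i b) \<longlonglongrightarrow> RM Q i b"
        unfolding RM_def by (intro tendsto_sum) (auto intro!: tendsto_mult tendsto_const conv)
    qed
    then have "(\<lambda>n. \<phi> i (marg_i pS Sa i) (RM (Qs (r n)) i)) \<longlonglongrightarrow> \<phi> i (marg_i pS Sa i) (RM Q i)"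
      by (rule continuous_on_tendsto_compose[OF phi_cont]) (auto simp: RM_simplex tc Qs(1))
    moreover have "(\<lambda>n. P i + e (r n)) \<longlonglongrightarrow> P i + 0" by (intro tendsto_add tendsto_const er)
    ultimately show ?thesis using Qs(3) by (intro LIMSEQ_le[where X="\<lambda>n. \<phi> i (marg_i pS Sa i) (RM (Qs (r n)) i)"]) auto
  qed
  have info: "info_SE_hat pS Sa Rh E Q \<le> R"
  proof -
    have "(\<lambda>n. \<Sum>x\<in>XS. \<Sum>t\<in>YS. hI (pE x * Qs (r n) x t) (pE x) (colQ (Qs (r n)) t))
        \<longlonglongrightarrow> (\<Sum>x\<in>XS. \<Sum>t\<in>YS. hI (pE x * Q x t) (pE x) (colQ Q t))"
    proof (intro tendsto_sum)
      fix x t assume x: "x \<in> XS" and t: "t \<in> YS"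
      show "(\<lambda>n. hI (pE x * Qs (r n) x t) (pE x) (colQ (Qs (r n)) t)) \<longlonglongrightarrow> hI (pE x * Q x t) (pE x) (colQ Q t)"
      proof (rule hI_cont)
        show "(\<lambda>n. pE x * Qs (r n) x t) \<longlonglongrightarrow> pE x * Q x t" by (intro tendsto_intros conv[OF x])
        show "(\<lambda>n. colQ (Qs (r n)) t) \<longlonglongrightarrow> colQ Q t"
          unfolding colQ_def by (intro tendsto_sum tendsto_intros conv)
        fix n
        show "0 \<le> pE x * Qs (r n) x t" using pE0 tc_props(1)[OF Qs(1) x] by simp
        show "pE x * Qs (r n) x t \<le> colQ (Qs (r n)) t" by (rule colQ_props(1)[OF Qs(1) x t])
        show "colQ (Qs (r n)) t \<le> 1" by (rule colQ_props(2)[OF Qs(1) x t])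
        show "pE x * Qs (r n) x t \<le> pE x" by (rule colQ_props(3)[OF Qs(1) x t])
      qed
    qed
    then have "(\<lambda>n. info_SE_hat pS Sa Rh E (Qs (r n))) \<longlonglongrightarrow> info_SE_hat pS Sa Rh E Q"
      using info_hI[OF tc] info_hI[OF Qs(1)] by simp
    moreover have "(\<lambda>n. R + e (r n)) \<longlonglongrightarrow> R + 0" by (intro tendsto_add tendsto_const er)
    ultimately show ?thesis using Qs(4) by (intro LIMSEQ_le[where X="\<lambda>n. info_SE_hat pS Sa Rh E (Qs (r n))"]) auto
  qed
  show ?thesis using feas_Cost[OF tc] cost per info by blast
qed

end

context ach_setup begin

lemma Iq_nonneg: "0 \<le> Iq"
proof -
  define P where "P z = w (fst z) (snd z)" for z
  define A where "A z = p (fst z) * q (snd z)" for z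
  have fin: "finite (X \<times> Y)" using finX finY by simp
  have "(\<Sum>z\<in>X \<times> Y. if P z = 0 then 0 else P z * ln (A z / P z)) \<le> ln (sum A (X \<times> Y))"
  proof (rule gibbs_ln[OF fin])
    show "\<And>z. z \<in> X \<times> Y \<Longrightarrow> 0 \<le> P z" by (auto simp: P_def w0)
    show "sum P (X \<times> Y) = 1" unfolding P_def using sum_w by (simp add: sum.cartesian_product case_prod_beta)
    show "\<And>z. z \<in> X \<times> Y \<Longrightarrow> 0 \<le> A z" by (auto simp: A_def p0 q0)
    fix z assume z: "z \<in> X \<times> Y" and Pz: "0 < P z"
    then have "0 < p (fst z)" "0 < Q (fst z) (snd z)"
      using p0[of "fst z"] Q0[of "fst z" "snd z"] by (auto simp: P_def w_def zero_less_mult_iff)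
    moreover have "0 < q (snd z)" using w_le_q[of "fst z" "snd z"] z Pz by (auto simp: P_def)
    ultimately show "0 < A z" by (simp add: A_def)
  qed
  also have "sum A (X \<times> Y) = 1"
  proof -
    have "sum A (X \<times> Y) = (\<Sum>a\<in>X. \<Sum>b\<in>Y. p a * q b)"
      unfolding A_def by (simp add: sum.cartesian_product case_prod_beta)
    also have "\<dots> = 1" using p1 q1 by (simp add: sum_distrib_left[symmetric] sum_distrib_right[symmetric])
    finally show ?thesis .
  qed
  finally have g: "(\<Sum>z\<in>X \<times> Y. if P z = 0 then 0 else P z * ln (A z / P z)) \<le> 0" by simp
  have "Iq = (\<Sum>z\<in>X \<times> Y. w (fst z) (snd z) * \<iota> (fst z) (snd z))"
    unfolding Iq_def mean_def by (simp add: sum.cartesian_product case_prod_beta)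
  also have "\<dots> = - (\<Sum>z\<in>X \<times> Y. if P z = 0 then 0 else P z * ln (A z / P z)) / ln 2"
  proof -
    have "w (fst z) (snd z) * \<iota> (fst z) (snd z) = - (if P z = 0 then 0 else P z * ln (A z / P z)) / ln 2"
      if z: "z \<in> X \<times> Y" for z
    proof (cases "P z = 0")
      case True then show ?thesis by (simp add: P_def \<iota>_def)
    next
      case False
      then have Pz: "0 < P z" using z by (auto simp: P_def w0 less_le)
      then have "0 < p (fst z)" "0 < Q (fst z) (snd z)"
        using p0[of "fst z"] Q0[of "fst z" "snd z"] z by (auto simp: P_def w_def zero_less_mult_iff)
      moreover have "0 < q (snd z)" using w_le_q[of "fst z" "snd z"] z Pz by (auto simp: P_def)
      ultimately have Ap: "0 < A z" by (simp add: A_def)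
      have "ln (A z / P z) = - ln (P z / A z)" using Ap Pz by (simp add: ln_div)
      then show ?thesis using False by (simp add: P_def A_def \<iota>_def log_def)
    qed
    then have "(\<Sum>z\<in>X \<times> Y. w (fst z) (snd z) * \<iota> (fst z) (snd z)) = (\<Sum>z\<in>X \<times> Y. - (if P z = 0 then 0 else P z * ln (A z / P z)) / ln 2)"
      by (intro sum.cong refl) 
    also have "\<dots> = - (\<Sum>z\<in>X \<times> Y. if P z = 0 then 0 else P z * ln (A z / P z)) / ln 2"
      by (simp only: sum_divide_distrib[symmetric] sum_negf)
    finally show ?thesis .
  qed
  finally show ?thesis using g by (simp add: divide_nonpos_pos)
qed

lemma Good_ratio:
  assumes x: "x \<in> seqset k X" and G: "Good k \<delta> H x y" and iH: "\<iota> \<in> H"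
  shows "Qk k x y \<le> 2 powr (real k * (Iq + \<delta>)) * pk k q y"
proof -
  have pos: "0 < w (x j) (y j)" if "j < k" for j using G that by (simp add: Good_def)
  have xj: "x j \<in> X" if "j < k" for j using x that by (auto simp: seqset_def PiE_iff)
  have eq: "Q (x j) (y j) = q (y j) * 2 powr (\<iota> (x j) (y j))" if j: "j < k" for j
  proof -
    have pp: "0 < p (x j)" "0 < Q (x j) (y j)"
      using pos[OF j] p0[of "x j"] Q0[OF xj[OF j], of "y j"] by (auto simp: w_def zero_less_mult_iff)
    have qp: "0 < q (y j)" using w_le_q[OF xj[OF j], of "y j"] pos[OF j] by linarith
    have "\<iota> (x j) (y j) = log 2 (Q (x j) (y j) / q (y j))"
      using pos[OF j] pp by (simp add: \<iota>_def w_def)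
    then show ?thesis using pp qp by simp
  qed
  have "Qk k x y = (\<Prod>j<k. q (y j) * 2 powr (\<iota> (x j) (y j)))"
    unfolding Qk_def by (intro prod.cong refl) (simp add: eq)
  also have "\<dots> = pk k q y * 2 powr (\<Sum>j<k. \<iota> (x j) (y j))"
    by (simp add: prod.distrib pk_def powr_sum)
  also have "\<dots> \<le> pk k q y * 2 powr (real k * (Iq + \<delta>))"
  proof (intro mult_left_mono powr_mono)
    show "(\<Sum>j<k. \<iota> (x j) (y j)) \<le> real k * (Iq + \<delta>)" using G iH by (simp add: Good_def Iq_def)
    show "0 \<le> pk k q y" unfolding pk_def by (intro prod_nonneg q0)
  qed simp
  finally show ?thesis by (simp add: mult.commute)
qed

lemma sum_Qk: "x \<in> seqset k X \<Longrightarrow> (\<Sum>y\<in>seqset k Y. Qk k x y) = 1"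
  unfolding Qk_def using sum_prod_seqset[OF finY, of "\<lambda>j b. Q (x j) b" k]
  by (simp add: Q1 seqset_def PiE_iff)

lemma pk_Qk: "pk k p x * Qk k x y = PQ k x y"
  unfolding pk_def Qk_def PQ_def w_def by (simp add: prod.distrib)

theorem exists_code:
  assumes k: "k > 0" and \<delta>: "\<delta> > 0" and finH: "finite H" and iH: "\<iota> \<in> H"
  defines "\<gamma> \<equiv> 2 powr (- (real k * (Iq + \<delta>))) / 2"
  shows "\<exists>c. (\<forall>m<N. c m \<in> seqset k Y) \<and>
     (\<Sum>x\<in>seqset k X. if \<exists>m<N. Good k \<delta> H x (c m) then 0 else pk k p x) \<le> 2 * Pbad k \<delta> H + (1 - \<gamma>)^N"
proof -
  define Xk where "Xk = seqset k X"
  define Yk where "Yk = seqset k Y"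
  define \<alpha> where "\<alpha> x = (\<Sum>y\<in>Yk. if Good k \<delta> H x y then Qk k x y else 0)" for x
  define U where "U = {x\<in>Xk. 1/2 \<le> \<alpha> x}"
  have finXk: "finite Xk" unfolding Xk_def by (rule finite_seqset[OF finX])
  have finYk: "finite Yk" unfolding Yk_def by (rule finite_seqset[OF finY])
  have Qk0: "0 \<le> Qk k x y" if "x \<in> Xk" for x y
    using that unfolding Qk_def Xk_def seqset_def by (intro prod_nonneg) (auto simp: Q0 PiE_iff)
  have pk0: "0 \<le> pk k p x" for x unfolding pk_def by (intro prod_nonneg p0)
  have \<alpha>1: "\<alpha> x \<le> 1" if "x \<in> Xk" for x
  proof -
    have "\<alpha> x \<le> (\<Sum>y\<in>Yk. Qk k x y)" unfolding \<alpha>_def by (intro sum_mono) (auto simp: Qk0 that)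
    then show ?thesis using sum_Qk that by (simp add: Xk_def Yk_def)
  qed
  have g0: "0 \<le> \<gamma>" unfolding \<gamma>_def by simp
  have Pb: "(\<Sum>x\<in>Xk. pk k p x * (1 - \<alpha> x)) = Pbad k \<delta> H"
  proof -
    have "pk k p x * (1 - \<alpha> x) = (\<Sum>y\<in>Yk. if Good k \<delta> H x y then 0 else PQ k x y)" if x: "x \<in> Xk" for x
    proof -
      have "1 - \<alpha> x = (\<Sum>y\<in>Yk. Qk k x y) - \<alpha> x" using sum_Qk x by (simp add: Xk_def Yk_def)
      also have "\<dots> = (\<Sum>y\<in>Yk. if Good k \<delta> H x y then 0 else Qk k x y)"
        unfolding \<alpha>_def by (simp add: sum_subtractf[symmetric]) (intro sum.cong refl, auto)
      finally show ?thesis by (simp add: sum_distrib_left pk_Qk[symmetric] if_distrib cong: if_cong)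
    qed
    then show ?thesis unfolding Pbad_def Xk_def Yk_def by (intro sum.cong refl) (auto simp: Xk_def)
  qed
  have covU: "\<gamma> \<le> (\<Sum>y\<in>Yk. if Good k \<delta> H x y then pk k q y else 0)" if x: "x \<in> U" for x
  proof -
    have xX: "x \<in> Xk" and ax: "1/2 \<le> \<alpha> x" using x by (auto simp: U_def)
    have "\<gamma> \<le> 2 powr (- (real k * (Iq + \<delta>))) * \<alpha> x"
      unfolding \<gamma>_def using ax by (simp add: mult_left_mono)
    also have "\<dots> = (\<Sum>y\<in>Yk. if Good k \<delta> H x y then 2 powr (- (real k * (Iq + \<delta>))) * Qk k x y else 0)"
      unfolding \<alpha>_def by (simp add: sum_distrib_left if_distrib cong: if_cong)
    also have "\<dots> \<le> (\<Sum>y\<in>Yk. if Good k \<delta> H x y then pk k q y else 0)"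
    proof (rule sum_mono)
      fix y assume "y \<in> Yk"
      show "(if Good k \<delta> H x y then 2 powr (- (real k * (Iq + \<delta>))) * Qk k x y else 0) \<le> (if Good k \<delta> H x y then pk k q y else 0)"
      proof (cases "Good k \<delta> H x y")
        case True
        have "2 powr (- (real k * (Iq + \<delta>))) * Qk k x y \<le> 2 powr (- (real k * (Iq + \<delta>))) * (2 powr (real k * (Iq + \<delta>)) * pk k q y)"
          using Good_ratio[OF xX[unfolded Xk_def] True iH] by (intro mult_left_mono) auto
        also have "\<dots> = pk k q y" by (simp add: mult.assoc[symmetric] powr_add[symmetric])
        finally show ?thesis using True by simp
      qed (simp add: pk_def prod_nonneg q0)
    qed
    finally show ?thesis .
  qed
  obtain c where c: "\<forall>m<N. c m \<in> Yk"
    and cU: "(\<Sum>x\<in>U. if \<forall>m<N. \<not> Good k \<delta> H x (c m) then pk k p x else 0) \<le> (1 - \<gamma>)^N * sum (pk k p) U"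
  proof -
    have "\<exists>c. (\<forall>m<N. c m \<in> Yk) \<and> (\<Sum>x\<in>U. if \<forall>m<N. \<not> Good k \<delta> H x (c m) then pk k p x else 0) \<le> (1 - \<gamma>)^N * sum (pk k p) U"
    proof (rule cover)
      show "finite U" using finXk by (simp add: U_def)
      show "finite Yk" by (rule finYk)
      show "\<And>y. y \<in> Yk \<Longrightarrow> 0 \<le> pk k q y" unfolding pk_def by (intro prod_nonneg q0)
      show "sum (pk k q) Yk = 1" unfolding Yk_def by (rule sum_pk[OF finY q1])
      show "\<And>x. 0 \<le> pk k p x" by (rule pk0)
      show "0 \<le> \<gamma>" by (rule g0)
      show "\<And>x. x \<in> U \<Longrightarrow> \<gamma> \<le> (\<Sum>y\<in>Yk. if Good k \<delta> H x y then pk k q y else 0)" by (rule covU)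
    qed
    then show ?thesis using that by blast
  qed
  have g1: "\<gamma> \<le> 1"
  proof -
    have t0: "0 \<le> real k * (Iq + \<delta>)" using Iq_nonneg \<delta> by simp
    have "1 \<le> 2 powr (real k * (Iq + \<delta>))" by (rule ge_one_powr_ge_zero) (use t0 in auto)
    then have "2 powr (- (real k * (Iq + \<delta>))) \<le> 1" by (simp add: powr_minus inverse_le_1_iff)
    then show ?thesis unfolding \<gamma>_def by simp
  qed
  have UX: "U \<subseteq> Xk" by (auto simp: U_def)
  have sX: "sum (pk k p) Xk = 1" unfolding Xk_def by (rule sum_pk[OF finX p1])
  have "(\<Sum>x\<in>Xk. if \<exists>m<N. Good k \<delta> H x (c m) then 0 else pk k p x)
      = (\<Sum>x\<in>Xk - U. if \<exists>m<N. Good k \<delta> H x (c m) then 0 else pk k p x)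
        + (\<Sum>x\<in>U. if \<exists>m<N. Good k \<delta> H x (c m) then 0 else pk k p x)"
    by (rule sum.subset_diff[OF UX finXk])
  also have "(\<Sum>x\<in>U. if \<exists>m<N. Good k \<delta> H x (c m) then 0 else pk k p x)
      = (\<Sum>x\<in>U. if \<forall>m<N. \<not> Good k \<delta> H x (c m) then pk k p x else 0)"
    by (intro sum.cong refl) auto
  also have "\<dots> \<le> (1 - \<gamma>)^N" 
  proof -
    have "sum (pk k p) U \<le> sum (pk k p) Xk" using UX finXk pk0 by (intro sum_mono2) auto
    then have "(1 - \<gamma>)^N * sum (pk k p) U \<le> (1 - \<gamma>)^N * 1" using sX g1 by (intro mult_left_mono) auto
    then show ?thesis using cU by simp
  qed
  also have "(\<Sum>x\<in>Xk - U. if \<exists>m<N. Good k \<delta> H x (c m) then 0 else pk k p x) \<le> 2 * Pbad k \<delta> H"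
  proof -
    have "(\<Sum>x\<in>Xk - U. if \<exists>m<N. Good k \<delta> H x (c m) then 0 else pk k p x) \<le> (\<Sum>x\<in>Xk - U. 2 * (pk k p x * (1 - \<alpha> x)))"
    proof (rule sum_mono)
      fix x assume x: "x \<in> Xk - U"
      then have "\<alpha> x < 1/2" by (auto simp: U_def)
      then have "pk k p x * (2 * \<alpha> x) \<le> pk k p x * 1" using pk0[of x] by (intro mult_left_mono) auto
      then have "pk k p x \<le> 2 * (pk k p x * (1 - \<alpha> x))" by (simp add: algebra_simps)
      then show "(if \<exists>m<N. Good k \<delta> H x (c m) then 0 else pk k p x) \<le> 2 * (pk k p x * (1 - \<alpha> x))"
        using pk0[of x] by auto
    qed
    also have "\<dots> \<le> (\<Sum>x\<in>Xk. 2 * (pk k p x * (1 - \<alpha> x)))"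
      using finXk \<alpha>1 pk0 by (intro sum_mono2) auto
    also have "\<dots> = 2 * Pbad k \<delta> H" unfolding Pb[symmetric] by (rule sum_distrib_left[symmetric])
    finally show ?thesis .
  qed
  finally show ?thesis using c unfolding Yk_def Xk_def by (intro exI[of _ c]) (auto simp: add.commute)
qed

end

lemma pow_le_inv:
  fixes \<gamma> :: real
  assumes "0 \<le> \<gamma>" "\<gamma> \<le> 1"
  shows "(1 - \<gamma>)^N \<le> 1 / (1 + real N * \<gamma>)"
proof -
  have b: "1 + real N * \<gamma> \<le> (1 + \<gamma>)^N" using Bernoulli_inequality[of \<gamma> N] assms by simp
  have "(1 - \<gamma>)^N * (1 + real N * \<gamma>) \<le> (1 - \<gamma>)^N * (1 + \<gamma>)^N"
    using b assms by (intro mult_left_mono) auto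
  also have "\<dots> = (1 - \<gamma>^2)^N" by (simp add: power_mult_distrib[symmetric] algebra_simps power2_eq_square)
  also have "\<dots> \<le> 1" using assms by (intro power_le_one) (auto simp: power_le_one)
  finally show ?thesis using assms by (simp add: pos_le_divide_eq add_pos_nonneg)
qed

lemma two_powr_ge: "1 + t * ln 2 \<le> 2 powr (t::real)"
  using exp_ge_add_one_self[of "t * ln 2"] by (simp add: powr_def)

lemma fail_bound:
  fixes I \<delta> :: real and k :: nat
  assumes k: "k > 0" and \<delta>: "\<delta> > 0" and I: "0 \<le> I"
  defines "N \<equiv> nat \<lfloor>2 powr (real k * (I + 2 * \<delta>))\<rfloor>"
  defines "\<gamma> \<equiv> 2 powr (- (real k * (I + \<delta>))) / 2"
  shows "(1 - \<gamma>)^N \<le> 2 / (real k * \<delta> * ln 2)" and "1 \<le> N" and "0 \<le> \<gamma>" and "\<gamma> \<le> 1"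
    and "log 2 (real N) \<le> real k * (I + 2 * \<delta>)"
proof -
  define A where "A = 2 powr (real k * (I + 2 * \<delta>))"
  define B where "B = 2 powr (real k * (I + \<delta>))"
  define C where "C = 2 powr (real k * \<delta>)"
  have AB: "A = B * C" unfolding A_def B_def C_def by (simp add: powr_add[symmetric] algebra_simps)
  have B1: "1 \<le> B" unfolding B_def using k \<delta> I by (intro ge_one_powr_ge_zero) auto
  have A1: "1 \<le> A" unfolding A_def using k \<delta> I by (intro ge_one_powr_ge_zero) auto
  have C1: "1 + real k * \<delta> * ln 2 \<le> C" unfolding C_def using two_powr_ge[of "real k * \<delta>"] by simp
  have g: "\<gamma> = 1 / (2 * B)" unfolding \<gamma>_def B_def powr_minus_divide by simp
  show g0: "0 \<le> \<gamma>" using B1 g by simp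
  show g1: "\<gamma> \<le> 1" using B1 g by simp
  have NA: "real N \<ge> A - 1" unfolding N_def A_def[symmetric] using A1 by linarith
  have NA2: "real N \<le> A" unfolding N_def A_def[symmetric] using A1 by linarith
  show "1 \<le> N" unfolding N_def A_def[symmetric] using A1 by linarith
  have "real N * \<gamma> \<ge> (A - 1) / (2 * B)" unfolding g using NA B1 by (simp add: divide_right_mono)
  also have "(A - 1) / (2 * B) = (C - 1 / B) / 2" unfolding AB using B1 by (simp add: field_simps)
  also have "\<dots> \<ge> (C - 1) / 2"
  proof -
    have "1 / B \<le> 1" using B1 by simp
    then show ?thesis by (intro divide_right_mono) auto
  qed
  finally have Ng0: "real N * \<gamma> \<ge> (C - 1) / 2" .
  have "real k * \<delta> * ln 2 / 2 \<le> (C - 1) / 2" using C1 by (intro divide_right_mono) auto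
  then have Ng: "real N * \<gamma> \<ge> real k * \<delta> * ln 2 / 2" using Ng0 by linarith
  have pos: "real k * \<delta> * ln 2 > 0" using k \<delta> by simp
  have "(1 - \<gamma>)^N \<le> 1 / (1 + real N * \<gamma>)" by (rule pow_le_inv[OF g0 g1])
  also have "\<dots> \<le> 1 / (real k * \<delta> * ln 2 / 2)"
    using Ng pos by (intro divide_left_mono) auto
  also have "\<dots> = 2 / (real k * \<delta> * ln 2)" by simp
  finally show "(1 - \<gamma>)^N \<le> 2 / (real k * \<delta> * ln 2)" .
  show "log 2 (real N) \<le> real k * (I + 2 * \<delta>)"
  proof -
    have "real N > 0" using \<open>1 \<le> N\<close> by simp
    then have "log 2 (real N) \<le> log 2 A" using NA2 by simp
    also have "log 2 A = real k * (I + 2 * \<delta>)" unfolding A_def by simp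
    finally show ?thesis .
  qed
qed

lemma cont_eta:
  fixes F :: "('b \<Rightarrow> real) \<Rightarrow> real"
  assumes cont: "continuous_on S F" and qS: "q \<in> S" and fin: "finite B"
    and supp: "\<And>r b. r \<in> S \<Longrightarrow> b \<notin> B \<Longrightarrow> r b = 0" and e: "\<epsilon> > 0"
  shows "\<exists>\<eta>>0. \<forall>r\<in>S. (\<forall>b\<in>B. \<bar>r b - q b\<bar> < \<eta>) \<longrightarrow> \<bar>F r - F q\<bar> < \<epsilon>"
proof (rule ccontr)
  assume "\<not> ?thesis"
  then have "\<forall>n. \<exists>r\<in>S. (\<forall>b\<in>B. \<bar>r b - q b\<bar> < inverse (real (Suc n))) \<and> \<not> \<bar>F r - F q\<bar> < \<epsilon>"
    by (metis inverse_positive_iff_positive of_nat_0_less_iff zero_less_Suc)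
  then obtain rs where rs: "\<And>n. rs n \<in> S" "\<And>n b. b \<in> B \<Longrightarrow> \<bar>rs n b - q b\<bar> < inverse (real (Suc n))"
    "\<And>n. \<not> \<bar>F (rs n) - F q\<bar> < \<epsilon>" by metis
  have "rs \<longlonglongrightarrow> q"
  proof (rule tendsto_fun_pointwise)
    fix b
    show "(\<lambda>n. rs n b) \<longlonglongrightarrow> q b"
    proof (cases "b \<in> B")
      case True
      have "(\<lambda>n. rs n b - q b) \<longlonglongrightarrow> 0"
        by (rule Lim_null_comparison[OF _ LIMSEQ_inverse_real_of_nat])
          (use rs(2)[OF True] in \<open>auto intro!: always_eventually less_imp_le\<close>)
      from tendsto_add[OF this tendsto_const[of "q b"]] show ?thesis by simp
    next
      case False
      then show ?thesis using supp[OF rs(1) False] supp[OF qS False] by simp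
    qed
  qed
  then have "(\<lambda>n. F (rs n)) \<longlonglongrightarrow> F q"
    by (rule continuous_on_tendsto_compose[OF cont _ qS]) (simp add: rs(1))
  then have "(\<lambda>n. F (rs n) - F q) \<longlonglongrightarrow> 0" by (simp add: LIM_zero)
  then have "eventually (\<lambda>n. dist (F (rs n) - F q) 0 < \<epsilon>) sequentially" by (rule tendstoD[OF _ e])
  then obtain n where "\<bar>F (rs n) - F q\<bar> < \<epsilon>" by (auto simp: eventually_sequentially dist_real_def)
  with rs(3) show False by blast
qed

lemma weighted_bound:
  fixes pw a :: "'x \<Rightarrow> real"
  assumes fin: "finite S" and pw0: "\<And>x. x \<in> S \<Longrightarrow> 0 \<le> pw x" and pw1: "sum pw S = 1"
    and ab: "\<And>x. x \<in> S \<Longrightarrow> a x \<le> B + (if ok x then 0 else M)"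
  shows "(\<Sum>x\<in>S. pw x * a x) \<le> B + M * (\<Sum>x\<in>S. if ok x then 0 else pw x)"
proof -
  have "(\<Sum>x\<in>S. pw x * a x) \<le> (\<Sum>x\<in>S. pw x * (B + (if ok x then 0 else M)))"
    by (intro sum_mono mult_left_mono ab pw0)
  also have "\<dots> = (\<Sum>x\<in>S. B * pw x + M * (if ok x then 0 else pw x))"
    by (intro sum.cong refl) (simp add: algebra_simps)
  also have "\<dots> = B * sum pw S + M * (\<Sum>x\<in>S. if ok x then 0 else pw x)"
    by (simp add: sum.distrib sum_distrib_left)
  finally show ?thesis using pw1 by simp
qed

lemma avg_swap:
  "(1 / real k) * (\<Sum>j<k. \<Sum>x\<in>S. pw x * G x j) = (\<Sum>x\<in>S. pw x * ((1 / real k) * (\<Sum>j<k. G x j)))"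
  by (simp add: sum_distrib_left sum.swap[of _ "{..<k}"] mult.left_commute)

context rdp_phi begin

lemma Cost0: "test_channel Sa Rh E Q \<Longrightarrow> 0 \<le> Cost Q i"
  unfolding Cost_def using pE0 tc_props(1) cst0 by (auto intro!: sum_nonneg simp: PiE_iff)

theorem achievability:
  assumes fe: "feas D P Q"
  shows "achievable pS Sa Rh E d \<phi> (info_SE_hat pS Sa Rh E Q) D P"
proof -
  have tc: "test_channel Sa Rh E Q" using fe by (simp add: feas_def)
  have costD: "Cost Q i \<le> D i" for i
    using fe exp_dist_Cost exp_hat_dist_Cost by (cases "i \<in> E") (auto simp: feas_def)
  have perP: "\<phi> i (marg_i pS Sa i) (RM Q i) \<le> P i" for i
  proof -
    have eq: "recon_marg pS Sa Rh E Q i = RM Q i" using recon_marg_RM by (simp add: fun_eq_iff)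
    have "\<phi> i (marg_i pS Sa i) (recon_marg pS Sa Rh E Q i) \<le> P i" using fe by (simp add: feas_def)
    then show ?thesis unfolding eq .
  qed
  interpret A: ach_setup XS YS pE Q
  proof
    show "finite XS" by (rule finXS)
    show "finite YS" by (rule finYS)
    show "\<And>a. 0 \<le> pE a" by (rule pE0)
    show "sum pE XS = 1" by (rule pE1)
    show "\<And>a b. a \<in> XS \<Longrightarrow> 0 \<le> Q a b" by (rule tc_props(1)[OF tc])
    show "\<And>a. a \<in> XS \<Longrightarrow> sum (Q a) YS = 1" by (rule tc_props(3)[OF tc])
  qed
  define I where "I = info_SE_hat pS Sa Rh E Q"
  have IqI: "A.Iq = I"
  proof -
    have r: "(\<Sum>t'\<in>YS. pE x * Q x t') = pE x" if "x \<in> XS" for x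
      using tc_props(3)[OF tc that] by (simp add: sum_distrib_left[symmetric])
    have c: "(\<Sum>x'\<in>XS. pE x' * Q x' t) = A.q t" for t by (simp add: A.q_def A.w_def)
    show ?thesis unfolding I_def info_SE_hat_def mutual_info_def A.Iq_def A.mean_def A.\<iota>_def
      by (intro sum.cong refl) (simp add: r c A.w_def)
  qed
  define hc where "hc i x t = cst i x (t i)" for i x and t :: "'i \<Rightarrow> 'b"
  define hm where "hm i b x t = (if t i = b then 1 else (0::real))" for i b and x :: "'i \<Rightarrow> 'a" and t :: "'i \<Rightarrow> 'b"
  define hn where "hn i b x t = - hm i b x t" for i b x t
  define H where "H = insert A.\<iota> (range hc \<union> (\<lambda>(i, b). hm i b) ` Sigma UNIV Rh \<union> (\<lambda>(i, b). hn i b) ` Sigma UNIV Rh)"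
  have finH: "finite H" unfolding H_def using fin_R by auto
  have iH: "A.\<iota> \<in> H" unfolding H_def by simp
  have mhc: "A.mean (hc i) = Cost Q i" for i
    unfolding A.mean_def Cost_def hc_def A.w_def by simp
  have mhm: "A.mean (hm i b) = RM Q i b" for i b
    unfolding A.mean_def RM_def hm_def A.w_def by (intro sum.cong refl) simp
  have mhn: "A.mean (hn i b) = - RM Q i b" for i b
    unfolding A.mean_def hn_def mhm[symmetric] by (simp add: sum_negf)
  show ?thesis unfolding achievable_def I_def[symmetric]
  proof (intro allI impI)
    fix \<epsilon> :: real assume e: "\<epsilon> > 0"
    have "\<forall>i. \<exists>\<eta>>0. \<forall>r\<in>prob_simplex (Rh i). (\<forall>b\<in>Rh i. \<bar>r b - RM Q i b\<bar> < \<eta>)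
        \<longrightarrow> \<bar>\<phi> i (marg_i pS Sa i) r - \<phi> i (marg_i pS Sa i) (RM Q i)\<bar> < \<epsilon> / 2"
    proof
      fix i
      show "\<exists>\<eta>>0. \<forall>r\<in>prob_simplex (Rh i). (\<forall>b\<in>Rh i. \<bar>r b - RM Q i b\<bar> < \<eta>)
        \<longrightarrow> \<bar>\<phi> i (marg_i pS Sa i) r - \<phi> i (marg_i pS Sa i) (RM Q i)\<bar> < \<epsilon> / 2"
        by (rule cont_eta[OF phi_cont RM_simplex[OF tc] fin_R]) (use e in \<open>auto simp: prob_simplex_def\<close>)
    qed
    then obtain \<eta> where \<eta>: "\<And>i. \<eta> i > 0" "\<And>i r. r \<in> prob_simplex (Rh i) \<Longrightarrow> (\<forall>b\<in>Rh i. \<bar>r b - RM Q i b\<bar> < \<eta> i)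
        \<Longrightarrow> \<bar>\<phi> i (marg_i pS Sa i) r - \<phi> i (marg_i pS Sa i) (RM Q i)\<bar> < \<epsilon> / 2"
      by metis
    define \<eta>0 where "\<eta>0 = Min (range \<eta>)"
    have \<eta>0: "\<eta>0 > 0" "\<And>i. \<eta>0 \<le> \<eta> i" unfolding \<eta>0_def using \<eta>(1) by auto
    define cM where "cM = (\<Sum>i\<in>UNIV. \<Sum>x\<in>XS. \<Sum>t\<in>YS. cst i x (t i))"
    have cM: "cst i x (t i) \<le> cM" if "x \<in> XS" "t \<in> YS" for i x t
    proof -
      have nn: "0 \<le> cst i' x' (t' i')" if "x' \<in> XS" "t' \<in> YS" for i' x' t'
        using cst0 that by (auto simp: PiE_iff)
      have "cst i x (t i) \<le> (\<Sum>t\<in>YS. cst i x (t i))" using finYS that nn by (intro member_le_sum) auto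
      also have "\<dots> \<le> (\<Sum>x\<in>XS. \<Sum>t\<in>YS. cst i x (t i))"
        using finXS that nn by (intro member_le_sum[where f="\<lambda>x. \<Sum>t\<in>YS. cst i x (t i)"]) (auto intro!: sum_nonneg)
      also have "\<dots> \<le> cM" unfolding cM_def using nn
        by (intro member_le_sum[where f="\<lambda>i. \<Sum>x\<in>XS. \<Sum>t\<in>YS. cst i x (t i)"]) (auto intro!: sum_nonneg)
      finally show ?thesis .
    qed
    have cM0: "0 \<le> cM" unfolding cM_def using cst0 by (auto intro!: sum_nonneg simp: PiE_iff)
    define \<delta> where "\<delta> = min (\<epsilon> / 4) (\<eta>0 / 4)"
    have \<delta>1: "\<delta> > 0" unfolding \<delta>_def using e \<eta>0 by simp
    have \<delta>2: "\<delta> \<le> \<epsilon> / 4" unfolding \<delta>_def by (rule min.cobounded1)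
    have \<delta>3: "\<delta> \<le> \<eta>0 / 4" unfolding \<delta>_def by (rule min.cobounded2)
    note \<delta> = \<delta>1 \<delta>2 \<delta>3
    define \<tau> where "\<tau> = min (\<epsilon> / (2 * (cM + 1))) (\<eta>0 / 2)"
    have \<tau>1: "\<tau> > 0" unfolding \<tau>_def using e \<eta>0 cM0 by simp
    have \<tau>2: "\<tau> \<le> \<epsilon> / (2 * (cM + 1))" unfolding \<tau>_def by (rule min.cobounded1)
    have \<tau>3: "\<tau> \<le> \<eta>0 / 2" unfolding \<tau>_def by (rule min.cobounded2)
    note \<tau> = \<tau>1 \<tau>2 \<tau>3
    define Vs where "Vs = (\<Sum>h\<in>H. A.var h)"
    have Vs0: "0 \<le> Vs" unfolding Vs_def A.var_def using A.w0 by (auto intro!: sum_nonneg)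
    define Cc where "Cc = 2 * (Vs / \<delta>^2) + 2 / (\<delta> * ln 2)"
    have Cc0: "0 \<le> Cc" unfolding Cc_def using Vs0 \<delta> by simp
    define K where "K = nat \<lceil>Cc / \<tau>\<rceil> + 1"
    show "\<exists>K. \<forall>k\<ge>K. \<exists>N f g. code_valid Sa Rh E k N f g \<and> log 2 (real N) / real k \<le> I + \<epsilon>
         \<and> (\<forall>i. code_dist pS Sa E d k f g i \<le> D i + \<epsilon>)
         \<and> (\<forall>i. \<phi> i (marg_i pS Sa i) (code_recon_marg pS Sa E k f g i) \<le> P i + \<epsilon>)"
    proof (rule exI[of _ K], intro allI impI)
      fix k assume kK: "K \<le> k"
      have k: "k > 0" using kK by (simp add: K_def)
      have Cck: "Cc / real k < \<tau>"
      proof -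
        have "Cc / \<tau> < real k" using kK unfolding K_def by linarith
        then show ?thesis using \<tau> k by (simp add: divide_less_eq mult.commute)
      qed
      define N where "N = nat \<lfloor>2 powr (real k * (I + 2 * \<delta>))\<rfloor>"
      define \<gamma> where "\<gamma> = 2 powr (- (real k * (I + \<delta>))) / 2"
      have I0: "0 \<le> I" using A.Iq_nonneg IqI by simp
      note fb = fail_bound[OF k \<delta>(1) I0, folded N_def \<gamma>_def]
      obtain c where c: "\<forall>m<N. c m \<in> seqset k YS"
        and Pf: "(\<Sum>x\<in>seqset k XS. if \<exists>m<N. A.Good k \<delta> H x (c m) then 0 else pk k pE x) \<le> 2 * A.Pbad k \<delta> H + (1 - \<gamma>)^N"
        using A.exists_code[OF k \<delta>(1) finH iH, of N] unfolding IqI \<gamma>_def by blast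
      define ok where "ok x = (\<exists>m<N. A.Good k \<delta> H x (c m))" for x
      define Pfail where "Pfail = (\<Sum>x\<in>seqset k XS. if ok x then 0 else pk k pE x)"
      have Pfail: "Pfail < \<tau>"
      proof -
        have "A.Pbad k \<delta> H \<le> (\<Sum>h\<in>H. A.var h / (real k * \<delta>^2))" by (rule A.Pbad_le[OF finH k \<delta>(1)])
        also have "\<dots> = Vs / (real k * \<delta>^2)" by (simp add: Vs_def sum_divide_distrib)
        finally have "Pfail \<le> 2 * (Vs / (real k * \<delta>^2)) + 2 / (real k * \<delta> * ln 2)"
          using Pf fb(1) unfolding Pfail_def ok_def by linarith
        also have "\<dots> = Cc / real k" unfolding Cc_def using k by (simp add: field_simps)
        finally show ?thesis using Cck by linarith
      qed
      have Pfail0: "0 \<le> Pfail" unfolding Pfail_def by (intro sum_nonneg) (simp add: pk_def prod_nonneg pE0)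
      define f where "f x = (if ok x then (LEAST m. m < N \<and> A.Good k \<delta> H x (c m)) else 0)" for x
      define g where "g m j i = c m j i" for m j i
      have fok: "f x < N \<and> A.Good k \<delta> H x (c (f x))" if "ok x" for x
      proof -
        from that obtain m where m: "m < N \<and> A.Good k \<delta> H x (c m)" unfolding ok_def by (elim exE conjE) simp
        have "(\<lambda>m. m < N \<and> A.Good k \<delta> H x (c m)) (LEAST m. m < N \<and> A.Good k \<delta> H x (c m))"
          by (rule LeastI[of "\<lambda>m. m < N \<and> A.Good k \<delta> H x (c m)", OF m])
        then show ?thesis using that by (simp add: f_def)
      qed
      have N1: "1 \<le> N" by (rule fb(2))
      have fN: "f x < N" for x using fok N1 by (cases "ok x") (auto simp: f_def)
      have cY: "c (f x) \<in> seqset k YS" for x using c fN by blast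
      have cv: "code_valid Sa Rh E k N f g"
        unfolding code_valid_def using N1 fN c by (auto simp: g_def seqset_def PiE_iff)
      have rate: "log 2 (real N) / real k \<le> I + \<epsilon>"
      proof -
        have "log 2 (real N) / real k \<le> I + 2 * \<delta>" using fb(5) k by (simp add: divide_le_eq mult.commute)
        then show ?thesis using \<delta> e by linarith
      qed
      have pk1: "sum (pk k pE) (seqset k XS) = 1" by (rule sum_pk[OF finXS pE1])
      have pkn: "\<And>x. 0 \<le> pk k pE x" by (simp add: pk_def prod_nonneg pE0)
      have xjX: "x j \<in> XS" if "x \<in> seqset k XS" "j < k" for x j using that by (auto simp: seqset_def PiE_iff)
      have yjY: "c (f x) j \<in> YS" if "j < k" for x j using cY[of x] that by (auto simp: seqset_def PiE_iff)
      have dist: "code_dist pS Sa E d k f g i \<le> D i + \<epsilon>" for i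
      proof -
        have "code_dist pS Sa E d k f g i = (\<Sum>x\<in>seqset k XS. pk k pE x * ((1 / real k) * (\<Sum>j<k. cst i (x j) (c (f x) j i))))"
          unfolding code_dist_eq[OF k] avg_swap g_def ..
        also have "\<dots> \<le> (Cost Q i + \<delta>) + cM * Pfail"
          unfolding Pfail_def
        proof (rule weighted_bound[OF finite_seqset[OF finXS] _ pk1])
          fix x assume x: "x \<in> seqset k XS"
          show "(1 / real k) * (\<Sum>j<k. cst i (x j) (c (f x) j i)) \<le> Cost Q i + \<delta> + (if ok x then 0 else cM)"
          proof (cases "ok x")
            case True
            then have G: "A.Good k \<delta> H x (c (f x))" using fok by blast
            have "hc i \<in> H" unfolding H_def by simp
            then have "(\<Sum>j<k. hc i (x j) (c (f x) j)) \<le> real k * (A.mean (hc i) + \<delta>)"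
              using G by (simp add: A.Good_def)
            then have "(\<Sum>j<k. cst i (x j) (c (f x) j i)) \<le> real k * (Cost Q i + \<delta>)" by (simp add: hc_def mhc)
            then show ?thesis using True k by (simp add: divide_le_eq mult.commute)
          next
            case False
            have "(\<Sum>j<k. cst i (x j) (c (f x) j i)) \<le> (\<Sum>j<k. cM)"
              by (intro sum_mono cM xjX[OF x] yjY) auto
            then have "(1 / real k) * (\<Sum>j<k. cst i (x j) (c (f x) j i)) \<le> cM" using k by (simp add: divide_le_eq mult.commute)
            then show ?thesis using False Cost0[OF tc, of i] \<delta> by simp
          qed
        qed (rule pkn)
        also have "\<dots> \<le> D i + \<epsilon> / 4 + cM * \<tau>"
          using costD[of i] \<delta> Pfail cM0 by (simp add: mult_left_mono add_mono)
        also have "cM * \<tau> \<le> \<epsilon> / 2"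
        proof -
          have "cM * \<tau> \<le> cM * (\<epsilon> / (2 * (cM + 1)))" using \<tau> cM0 by (intro mult_left_mono) auto
          also have "\<dots> \<le> \<epsilon> / 2" using cM0 e by (simp add: field_simps)
          finally show ?thesis .
        qed
        finally show ?thesis using e by simp
      qed
      have per: "\<phi> i (marg_i pS Sa i) (code_recon_marg pS Sa E k f g i) \<le> P i + \<epsilon>" for i
      proof -
        define fr where "fr x b = (1 / real k) * (\<Sum>j<k. if c (f x) j i = b then 1 else (0::real))" for x b
        have cr: "code_recon_marg pS Sa E k f g i b = (\<Sum>x\<in>seqset k XS. pk k pE x * fr x b)" for b
          unfolding code_recon_eq avg_swap fr_def g_def ..
        have fr01: "0 \<le> fr x b \<and> fr x b \<le> 1" for x b
        proof -
          have "(\<Sum>j<k. if c (f x) j i = b then 1 else (0::real)) \<le> (\<Sum>j<k. 1)" by (intro sum_mono) auto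
          moreover have "0 \<le> (\<Sum>j<k. if c (f x) j i = b then 1 else (0::real))" by (intro sum_nonneg) auto
          ultimately show ?thesis using k by (simp add: fr_def divide_le_eq)
        qed
        have closeb: "\<bar>code_recon_marg pS Sa E k f g i b - RM Q i b\<bar> < \<eta> i" if b: "b \<in> Rh i" for b
        proof -
          have "code_recon_marg pS Sa E k f g i b - RM Q i b = (\<Sum>x\<in>seqset k XS. pk k pE x * (fr x b - RM Q i b))"
            unfolding cr using pk1 by (simp add: algebra_simps sum_subtractf sum_distrib_right[symmetric])
          also have "\<bar>\<dots>\<bar> \<le> (\<Sum>x\<in>seqset k XS. pk k pE x * \<bar>fr x b - RM Q i b\<bar>)"
            using pkn by (simp add: sum_abs[THEN order_trans] abs_mult)
          also have "\<dots> \<le> \<delta> + 1 * Pfail"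
            unfolding Pfail_def
          proof (rule weighted_bound[OF finite_seqset[OF finXS] _ pk1])
            fix x assume x: "x \<in> seqset k XS"
            show "\<bar>fr x b - RM Q i b\<bar> \<le> \<delta> + (if ok x then 0 else 1)"
            proof (cases "ok x")
              case True
              then have G: "A.Good k \<delta> H x (c (f x))" using fok by blast
              have "hm i b \<in> H" "hn i b \<in> H" unfolding H_def using b by auto
              then have "(\<Sum>j<k. hm i b (x j) (c (f x) j)) \<le> real k * (A.mean (hm i b) + \<delta>)"
                and "(\<Sum>j<k. hn i b (x j) (c (f x) j)) \<le> real k * (A.mean (hn i b) + \<delta>)"
                using G by (auto simp: A.Good_def)
              then have "(\<Sum>j<k. if c (f x) j i = b then 1 else (0::real)) \<le> real k * (RM Q i b + \<delta>)"
                and "- (\<Sum>j<k. if c (f x) j i = b then 1 else (0::real)) \<le> real k * (- RM Q i b + \<delta>)"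
                by (simp_all add: hm_def hn_def mhm mhn sum_negf)
              then have s1: "(\<Sum>j<k. if c (f x) j i = b then 1 else (0::real)) \<le> real k * (RM Q i b + \<delta>)"
                and s2: "real k * (RM Q i b - \<delta>) \<le> (\<Sum>j<k. if c (f x) j i = b then 1 else (0::real))"
                by (simp_all add: algebra_simps)
              have "fr x b \<le> RM Q i b + \<delta>" using s1 k by (simp add: fr_def divide_le_eq mult.commute)
              moreover have "RM Q i b - \<delta> \<le> fr x b" using s2 k by (simp add: fr_def le_divide_eq mult.commute)
              ultimately have "\<bar>fr x b - RM Q i b\<bar> \<le> \<delta>" unfolding abs_le_iff by linarith
              then show ?thesis using True by simp
            next
              case False
              have "RM Q i b \<in> {0..1}"
              proof -
                have s: "RM Q i \<in> prob_simplex (Rh i)" by (rule RM_simplex[OF tc])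
                then have "RM Q i b \<le> sum (RM Q i) (Rh i)" using fin_R b by (intro member_le_sum) (auto simp: prob_simplex_def)
                then show ?thesis using s by (auto simp: prob_simplex_def)
              qed
              then show ?thesis using False fr01[of x b] \<delta> by auto
            qed
          qed (rule pkn)
          also have "\<dots> < \<eta> i" using \<delta> Pfail \<tau> \<eta>0[of] \<eta>0(2)[of i] by linarith
          finally show ?thesis .
        qed
        have crS: "code_recon_marg pS Sa E k f g i \<in> prob_simplex (Rh i)"
          unfolding prob_simplex_def
        proof (intro CollectI conjI allI impI)
          fix b
          show "0 \<le> code_recon_marg pS Sa E k f g i b" unfolding cr using pkn fr01 by (auto intro!: sum_nonneg)
          show "code_recon_marg pS Sa E k f g i b = 0" if "b \<notin> Rh i"
          proof -
            have "fr x b = 0" for x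
            proof -
              have "c (f x) j i \<noteq> b" if "j < k" for j using yjY[OF that, of x] \<open>b \<notin> Rh i\<close> by auto
              then show ?thesis unfolding fr_def by simp
            qed
            then show ?thesis unfolding cr by simp
          qed
        next
          have "sum (code_recon_marg pS Sa E k f g i) (Rh i) = (\<Sum>x\<in>seqset k XS. pk k pE x * (\<Sum>b\<in>Rh i. fr x b))"
            unfolding cr by (subst sum.swap) (simp add: sum_distrib_left)
          also have "\<dots> = (\<Sum>x\<in>seqset k XS. pk k pE x)"
          proof (intro sum.cong refl)
            fix x
            have "(\<Sum>b\<in>Rh i. fr x b) = (1 / real k) * (\<Sum>b\<in>Rh i. \<Sum>j<k. if c (f x) j i = b then 1 else (0::real))"
              unfolding fr_def by (rule sum_distrib_left[symmetric])
            also have "(\<Sum>b\<in>Rh i. \<Sum>j<k. if c (f x) j i = b then 1 else (0::real)) = (\<Sum>j<k. \<Sum>b\<in>Rh i. if c (f x) j i = b then 1 else (0::real))"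
              by (rule sum.swap)
            also have "\<dots> = (\<Sum>j<k. 1)"
            proof (intro sum.cong refl)
              fix j assume "j \<in> {..<k}"
              then have "c (f x) j i \<in> Rh i" using yjY[of j x] by (auto simp: PiE_iff)
              then show "(\<Sum>b\<in>Rh i. if c (f x) j i = b then 1 else (0::real)) = 1"
                using fin_R[of i] by (simp add: sum.delta)
            qed
            finally have "(\<Sum>b\<in>Rh i. fr x b) = 1" using k by simp
            then show "pk k pE x * (\<Sum>b\<in>Rh i. fr x b) = pk k pE x" by simp
          qed
          finally show "sum (code_recon_marg pS Sa E k f g i) (Rh i) = 1" using pk1 by simp
        qed
        have "\<bar>\<phi> i (marg_i pS Sa i) (code_recon_marg pS Sa E k f g i) - \<phi> i (marg_i pS Sa i) (RM Q i)\<bar> < \<epsilon> / 2"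
          using \<eta>(2)[OF crS] closeb by blast
        then show ?thesis using perP[of i] e by linarith
      qed
      show "\<exists>N f g. code_valid Sa Rh E k N f g \<and> log 2 (real N) / real k \<le> I + \<epsilon>
         \<and> (\<forall>i. code_dist pS Sa E d k f g i \<le> D i + \<epsilon>)
         \<and> (\<forall>i. \<phi> i (marg_i pS Sa i) (code_recon_marg pS Sa E k f g i) \<le> P i + \<epsilon>)"
        using cv rate dist per by blast
    qed
  qed
qed

end

theorem lemma1:
  fixes pS :: "('i::finite \<Rightarrow> 'a) \<Rightarrow> real"
    and Sa :: "'i \<Rightarrow> 'a set"
    and Rh :: "'i \<Rightarrow> 'b set"
    and E :: "'i set"
    and d :: "'i \<Rightarrow> 'a \<Rightarrow> 'b \<Rightarrow> real"
    and \<phi> :: "'i \<Rightarrow> ('a \<Rightarrow> real) \<Rightarrow> ('b \<Rightarrow> real) \<Rightarrow> real"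
    and D P :: "'i \<Rightarrow> real"
  assumes fin_S: "\<And>i. finite (Sa i)"
    and fin_R: "\<And>i. finite (Rh i)"
    and ne_R: "\<And>i. Rh i \<noteq> {}"
    and pmf: "pS \<in> prob_simplex (Pi\<^sub>E UNIV Sa)"
    and E_ne: "E \<noteq> {}"
    and d_nonneg: "\<And>i a b. a \<in> Sa i \<Longrightarrow> b \<in> Rh i \<Longrightarrow> 0 \<le> d i a b"
    and phi_nonneg: "\<And>i p q. p \<in> prob_simplex (Sa i) \<Longrightarrow> q \<in> prob_simplex (Rh i) \<Longrightarrow> 0 \<le> \<phi> i p q"
    and phi_cc: "\<And>i p. p \<in> prob_simplex (Sa i) \<Longrightarrow> convex_cont_on_simplex (Rh i) (\<phi> i p)"
  shows "R_op pS Sa Rh E d \<phi> D P = R_info pS Sa Rh E d \<phi> D P"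
proof -
  interpret X: rdp_phi pS Sa Rh E d \<phi>
    by unfold_locales (use fin_S fin_R ne_R pmf d_nonneg phi_cc in auto)
  have setI: "{ereal (info_SE_hat pS Sa Rh E Q) | Q.
            test_channel Sa Rh E Q
          \<and> (\<forall>i\<in>E. exp_dist pS Sa Rh E Q d i \<le> D i)
          \<and> (\<forall>i\<in>- E. exp_hat_dist pS Sa Rh E Q d i \<le> D i)
          \<and> (\<forall>i. \<phi> i (marg_i pS Sa i) (recon_marg pS Sa Rh E Q i) \<le> P i)}
      = {ereal (info_SE_hat pS Sa Rh E Q) | Q. X.feas D P Q}"
    by (simp add: X.feas_def)
  show ?thesis
  proof (rule antisym)
    show "R_op pS Sa Rh E d \<phi> D P \<le> R_info pS Sa Rh E d \<phi> D P"
      unfolding R_info_def setI R_op_def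
    proof (rule Inf_greatest)
      fix z assume "z \<in> {ereal (info_SE_hat pS Sa Rh E Q) | Q. X.feas D P Q}"
      then obtain Q where Q: "X.feas D P Q" and z: "z = ereal (info_SE_hat pS Sa Rh E Q)" by blast
      have "achievable pS Sa Rh E d \<phi> (info_SE_hat pS Sa Rh E Q) D P" by (rule X.achievability[OF Q])
      then have "z \<in> {ereal R | R. achievable pS Sa Rh E d \<phi> R D P}" using z by blast
      then show "Inf {ereal R | R. achievable pS Sa Rh E d \<phi> R D P} \<le> z" by (rule Inf_lower)
    qed
    show "R_info pS Sa Rh E d \<phi> D P \<le> R_op pS Sa Rh E d \<phi> D P"
      unfolding R_info_def setI R_op_def
    proof (rule Inf_greatest)
      fix z assume "z \<in> {ereal R | R. achievable pS Sa Rh E d \<phi> R D P}"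
      then obtain R where R: "achievable pS Sa Rh E d \<phi> R D P" and z: "z = ereal R" by blast
      obtain Q where Q: "X.feas D P Q" "info_SE_hat pS Sa Rh E Q \<le> R"
        using X.converse_limit[OF R] by blast
      have "Inf {ereal (info_SE_hat pS Sa Rh E Q) | Q. X.feas D P Q} \<le> ereal (info_SE_hat pS Sa Rh E Q)"
        using Q(1) by (intro Inf_lower) blast
      also have "\<dots> \<le> z" using Q(2) z by simp
      finally show "Inf {ereal (info_SE_hat pS Sa Rh E Q) | Q. X.feas D P Q} \<le> z" .
    qed
  qed
qed

end
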